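(* Let $\mathcal H_S,\mathcal H_E$ be finite-dimensional Hilbert spaces, $\hat H_S,\hat V_S$ Hermitian on $\mathcal H_S$, $\hat H_E,\hat V_E$ Hermitian on $\mathcal H_E$, $\hat\rho_S,\hat\rho_E$ density matrices, and $\hat H_{SE}=\hat H_S\otimes\hat{\mathds 1}+\hat V_S\otimes\hat V_E+\hat{\mathds 1}\otimes\hat H_E$. Then for every $t\ge 0$, $$\hat\rho_S^I(t):=e^{it\hat H_S}\,\mathrm{tr}_E\!\left(e^{-it\hat H_{SE}}\hat\rho_S\otimes\hat\rho_E\,e^{it\hat H_{SE}}\right)e^{-it\hat H_S} =\sum_{k=0}^\infty(-i)^k\int_0^t\!dt_1\int_0^{t_1}\!dt_2\cdots\int_0^{t_{k-1}}\!dt_k\sum_{\boldsymbol\xi,\boldsymbol\eta\in\Omega_{\hat V}^{\times k}}\delta_{\xi_1,\eta_1}\,q_E^{(k)}(\boldsymbol\xi\boldsymbol\eta\mathbf t)\,\mathscr W_S(\xi_1\eta_1t_1)\circ\mathscr W_S(\xi_2\eta_2t_2)\circ\cdots\circ\mathscr W_S(\xi_k\eta_kt_k)\,\hat\rho_S,$$ where the $k=0$ term is $\hat\rho_S$ (and the series converges).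
   Context: Units with $\hbar=1$. Write the spectral decomposition $\hat V_E=\sum_n v_n|n\rangle\langle n|$ with $\{|n\rangle\}$ an orthonormal eigenbasis of $\mathcal H_E$, and let $\Omega_{\hat V}$ be the set of distinct eigenvalues of $\hat V_E$. Let $\hat V_S(t)=e^{it\hat H_S}\hat V_Se^{-it\hat H_S}$ and, for $\xi,\eta\in\Omega_{\hat V}$, define the linear map on operators of $\mathcal H_S$: $\mathscr W_S(\xi\eta t)\hat A=\tfrac12(\xi+\eta)(\hat V_S(t)\hat A-\hat A\hat V_S(t))+\tfrac12(\xi-\eta)(\hat V_S(t)\hat A+\hat A\hat V_S(t))$. Let $\hat\rho_E(t)=e^{-it\hat H_E}\hat\rho_Ee^{it\hat H_E}$ and define the propagator $T_t(nm|n'm')=\mathrm{tr}_E\big(|m\rangle\langle n|e^{-it\hat H_E}|n'\rangle\langle m'|e^{it\hat H_E}\big)=\langle n|e^{-it\hat H_E}|n'\rangle\overline{\langle m|e^{-it\hat H_E}|m'\rangle}$. For $k\ge1$, $t_1>t_2>\dots>t_k\ge0$, $\boldsymbol\xi=(\xi_1,\dots,\xi_k),\boldsymbol\eta=(\eta_1,\dots,\eta_k)\in\Omega_{\hat V}^{\times k}$, the joint quasi-probability is $$q_E^{(k)}(\boldsymbol\xi\boldsymbol\eta\mathbf t)=\Big(\prod_{l=1}^k\sum_{n_l:\,v_{n_l}=\xi_l}\ \sum_{m_l:\,v_{m_l}=\eta_l}\Big)\delta_{n_1,m_1}\langle n_k|\hat\rho_E(t_k)|m_k\rangle\prod_{l=1}^{k-1}T_{t_l-t_{l+1}}(n_lm_l|n_{l+1}m_{l+1}).$$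 *)

theory Defs
  imports "HOL-Analysis.Analysis"
begin

text \<open>Operators on a finite-dimensional Hilbert space with orthonormal basis indexed by a
finite type 'a are represented by matrices complex^'a^'a (row index first).\<close>

type_synonym 'a op = "complex^'a^'a"

definition madj :: "'a::finite op \<Rightarrow> 'a op" where
  "madj A = (\<chi> i j. cnj (A$j$i))"

definition hermitian :: "'a::finite op \<Rightarrow> bool" where
  "hermitian A \<longleftrightarrow> madj A = A"

definition mtrace :: "'a::finite op \<Rightarrow> complex" where
  "mtrace A = (\<Sum>i\<in>UNIV. A$i$i)"

definition density :: "'a::finite op \<Rightarrow> bool" where
  "density A \<longleftrightarrow> hermitian A \<and>
     (\<forall>x::complex^'a. 0 \<le> Re (\<Sum>i\<in>UNIV. \<Sum>j\<in>UNIV. cnj (x$i) * A$i$j * x$j)) \<and>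
     mtrace A = 1"

definition msc :: "complex \<Rightarrow> 'a::finite op \<Rightarrow> 'a op" where
  "msc c A = (\<chi> i j. c * A$i$j)"

primrec mpow :: "'a::finite op \<Rightarrow> nat \<Rightarrow> 'a op" where
  "mpow A 0 = mat 1"
| "mpow A (Suc k) = A ** mpow A k"

definition mexp :: "'a::finite op \<Rightarrow> 'a op" where
  "mexp A = (\<chi> i j. (\<Sum>k. (mpow A k)$i$j / of_nat (fact k)))"

definition kron :: "'s::finite op \<Rightarrow> 'e::finite op \<Rightarrow> ('s \<times> 'e) op" where
  "kron A B = (\<chi> p q. A$(fst p)$(fst q) * B$(snd p)$(snd q))"

definition ptraceE :: "('s::finite \<times> 'e::finite) op \<Rightarrow> 's op" where
  "ptraceE X = (\<chi> i j. (\<Sum>e\<in>UNIV. X$(i,e)$(j,e)))"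

definition HSE :: "'s::finite op \<Rightarrow> 's op \<Rightarrow> 'e::finite op \<Rightarrow> 'e op \<Rightarrow> ('s \<times> 'e) op" where
  "HSE HS VS HE VE = kron HS (mat 1) + kron VS VE + kron (mat 1) HE"

definition evol :: "'a::finite op \<Rightarrow> real \<Rightarrow> 'a op" where
  "evol H t = mexp (msc (- (\<i> * of_real t)) H)"

definition rhoSI :: "'s::finite op \<Rightarrow> 's op \<Rightarrow> 'e::finite op \<Rightarrow> 'e op \<Rightarrow> 's op \<Rightarrow> 'e op
    \<Rightarrow> real \<Rightarrow> 's op" where
  "rhoSI HS VS HE VE rhoS rhoE t =
     evol HS (-t) ** ptraceE (evol (HSE HS VS HE VE) t ** kron rhoS rhoE ** evol (HSE HS VS HE VE) (-t))
       ** evol HS t"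

definition braket :: "complex^'a \<Rightarrow> 'a::finite op \<Rightarrow> complex^'a \<Rightarrow> complex" where
  "braket x A y = (\<Sum>i\<in>UNIV. \<Sum>j\<in>UNIV. cnj (x$i) * A$i$j * y$j)"

definition ketbra :: "complex^'a::finite \<Rightarrow> complex^'a \<Rightarrow> 'a op" where
  "ketbra x y = (\<chi> i j. x$i * cnj (y$j))"

definition orthonormal_family :: "('n \<Rightarrow> complex^'a::finite) \<Rightarrow> bool" where
  "orthonormal_family b \<longleftrightarrow>
     (\<forall>n m. (\<Sum>i\<in>UNIV. cnj (b n $ i) * b m $ i) = (if n = m then 1 else 0))"

definition VSt :: "'s::finite op \<Rightarrow> 's op \<Rightarrow> real \<Rightarrow> 's op" where
  "VSt HS VS t = evol HS (-t) ** VS ** evol HS t"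

definition WS :: "'s::finite op \<Rightarrow> 's op \<Rightarrow> real \<Rightarrow> real \<Rightarrow> real \<Rightarrow> 's op \<Rightarrow> 's op" where
  "WS HS VS xi eta t A =
     msc (of_real ((xi + eta) / 2)) (VSt HS VS t ** A - A ** VSt HS VS t)
   + msc (of_real ((xi - eta) / 2)) (VSt HS VS t ** A + A ** VSt HS VS t)"

text \<open>Composition W_S(xi_1 eta_1 t_1) o ... o W_S(xi_k eta_k t_k) applied to A
 (lists are indexed from 0: the list head corresponds to index 1).\<close>
fun Wcomp :: "'s::finite op \<Rightarrow> 's op \<Rightarrow> real list \<Rightarrow> real list \<Rightarrow> real list \<Rightarrow> 's op \<Rightarrow> 's op" where
  "Wcomp HS VS (x # xs) (y # ys) (s # ss) A = WS HS VS x y s (Wcomp HS VS xs ys ss A)"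
| "Wcomp HS VS _ _ _ A = A"

definition Tprop :: "'e::finite op \<Rightarrow> ('e \<Rightarrow> complex^'e) \<Rightarrow> real \<Rightarrow> 'e \<Rightarrow> 'e \<Rightarrow> 'e \<Rightarrow> 'e \<Rightarrow> complex" where
  "Tprop HE b t n m n' m' = braket (b n) (evol HE t) (b n') * cnj (braket (b m) (evol HE t) (b m'))"

text \<open>Joint quasi-probability q_E^(k)(xi eta t), k = length xs (used for k \<ge> 1).\<close>
definition qE :: "'e::finite op \<Rightarrow> 'e op \<Rightarrow> ('e \<Rightarrow> complex^'e) \<Rightarrow> ('e \<Rightarrow> real)
    \<Rightarrow> real list \<Rightarrow> real list \<Rightarrow> real list \<Rightarrow> complex" where
  "qE HE rhoE b v xs ys ts =
    (let k = length xs in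
     \<Sum>ns\<in>{ns. length ns = k \<and> (\<forall>l<k. v (ns!l) = xs!l)}.
     \<Sum>ms\<in>{ms. length ms = k \<and> (\<forall>l<k. v (ms!l) = ys!l)}.
       (if ns!0 = ms!0 then 1 else 0)
       * braket (b (ns!(k-1))) (evol HE (ts!(k-1)) ** rhoE ** evol HE (-(ts!(k-1)))) (b (ms!(k-1)))
       * (\<Prod>l<k-1. Tprop HE b (ts!l - ts!(l+1)) (ns!l) (ms!l) (ns!(l+1)) (ms!(l+1))))"

text \<open>Ordered iterated integral
  iterint k s F = \<integral>_0^s dt_1 \<integral>_0^{t_1} dt_2 ... \<integral>_0^{t_{k-1}} dt_k F [t_1,...,t_k].\<close>
primrec iterint :: "nat \<Rightarrow> real \<Rightarrow> (real list \<Rightarrow> complex) \<Rightarrow> complex" where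
  "iterint 0 s F = F []"
| "iterint (Suc k) s F = integral {0..s} (\<lambda>u. iterint k u (\<lambda>ts. F (u # ts)))"

definition dyson_term :: "'s::finite op \<Rightarrow> 's op \<Rightarrow> 'e::finite op \<Rightarrow> 'e op \<Rightarrow> 's op \<Rightarrow> 'e op
    \<Rightarrow> ('e \<Rightarrow> complex^'e) \<Rightarrow> ('e \<Rightarrow> real) \<Rightarrow> real \<Rightarrow> nat \<Rightarrow> 's \<Rightarrow> 's \<Rightarrow> complex" where
  "dyson_term HS VS HE VE rhoS rhoE b v t k i j =
    (if k = 0 then rhoS$i$j else
     (- \<i>) ^ k * iterint k t (\<lambda>ts.
        \<Sum>xs\<in>{xs. length xs = k \<and> set xs \<subseteq> range v}.
        \<Sum>ys\<in>{ys. length ys = k \<and> set ys \<subseteq> range v}.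
          (if xs!0 = ys!0 then 1 else 0) * qE HE rhoE b v xs ys ts
          * (Wcomp HS VS xs ys ts rhoS)$i$j))"

end

theory Submission
  imports Defs
begin


lemma mm_scaleR_right: "(A::'a::finite op) ** (c *\<^sub>R B) = c *\<^sub>R (A ** B)"
  by (simp add: vec_eq_iff matrix_matrix_mult_def scaleR_sum_right)
lemma mm_scaleR_left: "(c *\<^sub>R (A::'a::finite op)) ** B = c *\<^sub>R (A ** B)"
  by (simp add: vec_eq_iff matrix_matrix_mult_def scaleR_sum_right)
lemma mm_add_left: "((A::'a::finite op) + B) ** C = A ** C + B ** C"
  by (simp add: vec_eq_iff matrix_matrix_mult_def sum.distrib algebra_simps)
lemma mm_diff_left: "((A::'a::finite op) - B) ** C = A ** C - B ** C"
  by (simp add: vec_eq_iff matrix_matrix_mult_def sum_subtractf algebra_simps)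
lemma mm_diff_right: "(C::'a::finite op) ** (A - B) = C ** A - C ** B"
  by (simp add: vec_eq_iff matrix_matrix_mult_def sum_subtractf algebra_simps)

lemma bilinear_mm: "bilinear ((**) :: 'a::finite op \<Rightarrow> 'a op \<Rightarrow> 'a op)"
  unfolding bilinear_def
  by (auto intro!: linearI simp: matrix_add_ldistrib mm_add_left mm_scaleR_right mm_scaleR_left)

lemma bb_mm: "bounded_bilinear ((**) :: 'a::finite op \<Rightarrow> 'a op \<Rightarrow> 'a op)"
  using bilinear_mm bilinear_conv_bounded_bilinear by blast

lemma vec_has_vector_derivative:
  fixes f :: "real \<Rightarrow> 'a::real_normed_vector^'n::finite"
  assumes "\<And>i. ((\<lambda>x. f x $ i) has_vector_derivative D $ i) (at t within S)"
  shows "(f has_vector_derivative D) (at t within S)"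
proof -
  have "((\<lambda>y. (1 / norm (y - t)) *\<^sub>R (f y $ i - (f t $ i + (y - t) *\<^sub>R D $ i))) \<longlongrightarrow> 0) (at t within S)" for i
    using assms[of i] unfolding has_vector_derivative_def has_derivative_within by auto
  hence "((\<lambda>y. \<chi> i. (1 / norm (y - t)) *\<^sub>R (f y $ i - (f t $ i + (y - t) *\<^sub>R D $ i))) \<longlongrightarrow> (\<chi> i. 0)) (at t within S)"
    by (intro tendsto_vec_lambda) 
  moreover have "(\<lambda>y. \<chi> i. (1 / norm (y - t)) *\<^sub>R (f y $ i - (f t $ i + (y - t) *\<^sub>R D $ i))) = (\<lambda>y. (1 / norm (y - t)) *\<^sub>R (f y - (f t + (y - t) *\<^sub>R D)))"
    by (rule ext) (simp add: vec_eq_iff)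
  moreover have "(\<chi> i. 0) = (0::'a^'n)" by (simp add: vec_eq_iff)
  ultimately show ?thesis unfolding has_vector_derivative_def has_derivative_within
    by (auto intro: bounded_linear_scaleR_left)
qed

lemma mat_has_vector_derivative:
  fixes f :: "real \<Rightarrow> 'a::real_normed_vector^'n::finite^'m::finite"
  assumes "\<And>i j. ((\<lambda>x. f x $ i $ j) has_vector_derivative D $ i $ j) (at t within S)"
  shows "(f has_vector_derivative D) (at t within S)"
  by (intro vec_has_vector_derivative assms)


lemma msc_mm: "msc c (A::'a::finite op) ** msc d B = msc (c*d) (A ** B)"
  by (simp add: vec_eq_iff matrix_matrix_mult_def msc_def sum_distrib_left algebra_simps)

lemma mpow_msc: "mpow (msc c H) k = msc (c^k) (mpow H k)"
proof (induction k)
  case 0 show ?case by (simp add: msc_def vec_eq_iff mat_def)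
next
  case (Suc k) show ?case by (simp only: mpow.simps Suc msc_mm power_Suc)
qed

lemma mpow_Suc_right: "mpow H (Suc k) = mpow H k ** H"
  by (induction k) (auto simp: matrix_mul_assoc)

definition Cb :: "'a::finite op \<Rightarrow> real" where
  "Cb H = (\<Sum>i\<in>UNIV. \<Sum>j\<in>UNIV. cmod (H$i$j))"

lemma Cb_nonneg: "0 \<le> Cb H"
  unfolding Cb_def by (intro sum_nonneg) auto

lemma row_le_Cb: "(\<Sum>l\<in>UNIV. cmod (H$i$l)) \<le> Cb H"
  unfolding Cb_def by (rule member_le_sum) (auto intro: sum_nonneg)

lemma mpow_bound: "cmod (mpow H k $ i $ j) \<le> Cb H ^ k"
proof (induction k arbitrary: i j)
  case 0 then show ?case by (simp add: mat_def)
next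
  case (Suc k)
  have "cmod (mpow H (Suc k) $ i $ j) = cmod (\<Sum>l\<in>UNIV. H$i$l * mpow H k $ l $ j)"
    by (simp add: matrix_matrix_mult_def)
  also have "\<dots> \<le> (\<Sum>l\<in>UNIV. cmod (H$i$l) * Cb H ^ k)"
    by (rule order_trans[OF norm_sum]) (auto intro!: sum_mono mult_left_mono Suc simp: norm_mult)
  also have "\<dots> = (\<Sum>l\<in>UNIV. cmod (H$i$l)) * Cb H ^ k" by (simp add: sum_distrib_right)
  also have "\<dots> \<le> Cb H * Cb H ^ k" by (intro mult_right_mono row_le_Cb) (simp add: Cb_nonneg)
  finally show ?case by simp
qed

definition ea :: "'a::finite op \<Rightarrow> 'a \<Rightarrow> 'a \<Rightarrow> nat \<Rightarrow> complex" where
  "ea H i j k = (- \<i>)^k * mpow H k $ i $ j / of_nat (fact k)"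

lemma ea_summable: "summable (\<lambda>k. ea H i j k * z^k)"
proof (rule summable_comparison_test')
  show "summable (\<lambda>k. inverse (fact k) * (Cb H * cmod z)^k)" by (rule summable_exp)
  fix k :: nat
  have "norm (ea H i j k * z^k) = cmod (mpow H k $ i $ j) * cmod z ^ k / fact k"
    by (simp add: ea_def norm_mult norm_divide norm_power)
  also have "\<dots> \<le> Cb H ^ k * cmod z ^ k / fact k"
    by (intro divide_right_mono mult_right_mono mpow_bound) auto
  finally show "norm (ea H i j k * z^k) \<le> inverse (fact k) * (Cb H * cmod z)^k"
    by (simp add: power_mult_distrib field_simps)
qed

lemma pow_aux: "(- (\<i> * c))^k = (-\<i>)^k * (c::complex)^k"
  by (metis minus_mult_left power_mult_distrib)

lemma evol_entry: "evol H t $ i $ j = (\<Sum>k. ea H i j k * (of_real t)^k)"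
  unfolding evol_def mexp_def mpow_msc
  by (simp add: pow_aux  msc_def ea_def power_mult_distrib algebra_simps)

lemma diffs_ea0: "diffs (ea H i j) k = (- \<i>)^(Suc k) * mpow H (Suc k) $ i $ j / of_nat (fact k)"
proof -
  have nz: "(of_nat (Suc k)::complex) \<noteq> 0" by (simp del: of_nat_Suc)
  have "of_nat (Suc k) * (x / of_nat (fact (Suc k))) = x / (of_nat (fact k) :: complex)" for x
  proof -
    have "x / of_nat (fact (Suc k)) = x / (of_nat (Suc k) * (fact k :: complex))"
      by (subst of_nat_fact, subst fact_Suc, rule refl)
    hence "of_nat (Suc k) * (x / of_nat (fact (Suc k))) = (of_nat (Suc k) * x) / (of_nat (Suc k) * (fact k :: complex))"
      by (simp only: times_divide_eq_right)
    also have "\<dots> = x / fact k" by (rule mult_divide_mult_cancel_left[OF nz])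
    finally show ?thesis by simp
  qed
  thus ?thesis unfolding diffs_def ea_def by (metis (no_types) mult.assoc)
qed

lemma diffs_ea: "diffs (ea H i j) k * z^k = (\<Sum>l\<in>UNIV. (- \<i>) * H$i$l * (ea H l j k * z^k))"
  unfolding diffs_ea0 by (simp add: ea_def matrix_matrix_mult_def sum_distrib_left sum_divide_distrib algebra_simps)

lemma diffs_ea': "diffs (ea H i j) k * z^k = (\<Sum>l\<in>UNIV. (ea H i l k * z^k) * ((- \<i>) * H$l$j))"
  unfolding diffs_ea0 by (simp add: ea_def mpow_Suc_right[of H k] matrix_matrix_mult_def
       sum_distrib_left sum_distrib_right sum_divide_distrib algebra_simps del: mpow.simps)

lemma evol_deriv_entry:
  "((\<lambda>t. evol H t $ i $ j) has_vector_derivative (\<Sum>k. diffs (ea H i j) k * (of_real t)^k)) (at t within S)"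
  unfolding evol_entry
  by (intro has_vector_derivative_real_field termdiffs_strong_converges_everywhere ea_summable)

lemma evol_deriv:
  "((\<lambda>t. evol H t) has_vector_derivative (msc (- \<i>) H ** evol H t)) (at t within S)"
proof (rule mat_has_vector_derivative)
  fix i j
  have "(\<Sum>k. diffs (ea H i j) k * (of_real t)^k) = (\<Sum>l\<in>UNIV. \<Sum>k. (- \<i>) * H$i$l * (ea H l j k * (of_real t)^k))"
    unfolding diffs_ea by (rule suminf_sum) (intro summable_mult ea_summable)
  also have "\<dots> = (\<Sum>l\<in>UNIV. (- \<i>) * H$i$l * (\<Sum>k. ea H l j k * (of_real t)^k))"
    by (intro sum.cong refl suminf_mult ea_summable)
  also have "\<dots> = (msc (- \<i>) H ** evol H t) $ i $ j"
    by (simp add: matrix_matrix_mult_def msc_def evol_entry)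
  finally show "((\<lambda>t. evol H t $ i $ j) has_vector_derivative (msc (- \<i>) H ** evol H t) $ i $ j) (at t within S)"
    using evol_deriv_entry by metis
qed

lemma evol_comm: "msc (- \<i>) H ** evol H t = evol H t ** msc (- \<i>) H"
proof -
  have "(msc (- \<i>) H ** evol H t) $ i $ j = (evol H t ** msc (- \<i>) H) $ i $ j" for i j
  proof -
    have "(msc (- \<i>) H ** evol H t) $ i $ j = (\<Sum>l\<in>UNIV. (- \<i>) * H$i$l * (\<Sum>k. ea H l j k * (of_real t)^k))"
      by (simp add: matrix_matrix_mult_def msc_def evol_entry)
    also have "\<dots> = (\<Sum>l\<in>UNIV. \<Sum>k. (- \<i>) * H$i$l * (ea H l j k * (of_real t)^k))"
      by (intro sum.cong refl suminf_mult[symmetric] ea_summable)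
    also have "\<dots> = (\<Sum>k. diffs (ea H i j) k * (of_real t)^k)"
      unfolding diffs_ea by (rule suminf_sum[symmetric]) (intro summable_mult ea_summable)
    also have "\<dots> = (\<Sum>l\<in>UNIV. \<Sum>k. (ea H i l k * (of_real t)^k) * ((- \<i>) * H$l$j))"
      unfolding diffs_ea' by (rule suminf_sum) (intro summable_mult2 ea_summable)
    also have "\<dots> = (\<Sum>l\<in>UNIV. (\<Sum>k. ea H i l k * (of_real t)^k) * ((- \<i>) * H$l$j))"
      by (intro sum.cong refl suminf_mult2[symmetric] ea_summable)
    also have "\<dots> = (evol H t ** msc (- \<i>) H) $ i $ j"
      by (simp add: matrix_matrix_mult_def msc_def evol_entry)
    finally show ?thesis .
  qed
  thus ?thesis by (simp add: vec_eq_iff)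
qed

lemma evol_0: "evol H 0 = mat 1"
proof -
  have "evol H 0 $ i $ j = mat 1 $ i $ j" for i j
  proof -
    have "(\<lambda>k. ea H i j k * (of_real 0)^k) = (\<lambda>k. if k = 0 then mat 1 $ i $ j else 0)"
      by (auto simp: ea_def)
    hence "(\<Sum>k. ea H i j k * (of_real 0)^k) = (\<Sum>k. if k = 0 then mat 1 $ i $ j else 0)" by simp
    also have "\<dots> = mat 1 $ i $ j" using sums_single[of 0 "\<lambda>_. mat 1 $ i $ j"] by (metis sums_unique)
    finally show ?thesis unfolding evol_entry .
  qed
  thus ?thesis by (simp add: vec_eq_iff)
qed


abbreviation mi :: "'a::finite op \<Rightarrow> 'a op" where "mi H \<equiv> msc (- \<i>) H"

lemma evol_deriv_aff:
  "((\<lambda>t. evol H (c*t + d)) has_vector_derivative c *\<^sub>R (mi H ** evol H (c*t + d))) (at t within S)"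
proof -
  have 1: "((\<lambda>t. c*t + d) has_vector_derivative c) (at t within S)"
    by (auto intro!: derivative_eq_intros simp: has_real_derivative_iff_has_vector_derivative[symmetric])
  show ?thesis using vector_diff_chain_within[OF 1 evol_deriv[of H "c*t+d" "(\<lambda>t. c*t + d) ` S"]]
    by (simp add: o_def)
qed

lemma evol_deriv_neg:
  "((\<lambda>t. evol H (- t)) has_vector_derivative - (mi H ** evol H (- t))) (at t within S)"
  using evol_deriv_aff[of H "-1" 0 t S] by simp

lemma evol_inv: "evol H (- t) ** evol H t = mat 1"
proof -
  let ?f = "\<lambda>t. evol H (- t) ** evol H t"
  have D: "(?f has_vector_derivative 0) (at x within UNIV)" for x
  proof -
    have "(?f has_vector_derivative (evol H (- x) ** (mi H ** evol H x) + (- (mi H ** evol H (- x))) ** evol H x)) (at x within UNIV)"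
      by (rule bounded_bilinear.has_vector_derivative[OF bb_mm evol_deriv_neg evol_deriv])
    moreover have "evol H (- x) ** (mi H ** evol H x) + (- (mi H ** evol H (- x))) ** evol H x = 0"
    proof -
      have eq: "evol H (- x) ** (mi H ** evol H x) = (mi H ** evol H (- x)) ** evol H x"
        by (simp only: matrix_mul_assoc evol_comm[of H "- x"])
      show ?thesis by (simp add: eq bounded_bilinear.minus_left[OF bb_mm])
    qed
    ultimately show ?thesis by simp
  qed
  obtain c where "\<And>x. x \<in> UNIV \<Longrightarrow> ?f x = c"
    using has_vector_derivative_zero_constant[of UNIV ?f] D by blast
  hence "?f t = ?f 0" by (metis UNIV_I)
  thus ?thesis by (simp add: evol_0)
qed

lemma evol_inv': "evol H t ** evol H (- t) = mat 1"
  using evol_inv[of H "-t"] by simp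

lemma evol_add: "evol H (s + u) = evol H s ** evol H u"
proof -
  let ?f = "\<lambda>s. evol H (- s) ** evol H (s + u)"
  have D: "(?f has_vector_derivative 0) (at x within UNIV)" for x
  proof -
    have d2: "((\<lambda>s. evol H (s + u)) has_vector_derivative mi H ** evol H (x + u)) (at x within UNIV)"
      using evol_deriv_aff[of H 1 u x UNIV] by (simp add: add.commute)
    have "(?f has_vector_derivative (evol H (- x) ** (mi H ** evol H (x + u)) + (- (mi H ** evol H (- x))) ** evol H (x + u))) (at x within UNIV)"
      by (rule bounded_bilinear.has_vector_derivative[OF bb_mm evol_deriv_neg d2])
    moreover have "evol H (- x) ** (mi H ** evol H (x + u)) + (- (mi H ** evol H (- x))) ** evol H (x + u) = 0"
    proof -
      have eq: "evol H (- x) ** (mi H ** evol H (x + u)) = (mi H ** evol H (- x)) ** evol H (x + u)"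
        by (simp only: matrix_mul_assoc evol_comm[of H "- x"])
      show ?thesis by (simp add: eq bounded_bilinear.minus_left[OF bb_mm])
    qed
    ultimately show ?thesis by simp
  qed
  obtain c where "\<And>x. x \<in> UNIV \<Longrightarrow> ?f x = c"
    using has_vector_derivative_zero_constant[of UNIV ?f] D by blast
  hence "?f s = ?f 0" by (metis UNIV_I)
  hence "evol H (- s) ** evol H (s + u) = evol H u" by (simp add: evol_0)
  hence "evol H s ** (evol H (- s) ** evol H (s + u)) = evol H s ** evol H u" by simp
  thus ?thesis by (simp add: matrix_mul_assoc evol_inv')
qed

lemma madj_mm: "madj ((A::'a::finite op) ** B) = madj B ** madj A"
  by (simp add: vec_eq_iff madj_def matrix_matrix_mult_def mult.commute)

lemma madj_madj: "madj (madj A) = A"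
  by (simp add: vec_eq_iff madj_def)

lemma madj_mpow: "hermitian H \<Longrightarrow> madj (mpow H k) = mpow H k"
proof (induction k)
  case 0 show ?case by (simp add: vec_eq_iff madj_def mat_def)
next
  case (Suc k)
  have "madj (mpow H (Suc k)) = mpow H k ** H"
    using Suc by (simp add: madj_mm hermitian_def)
  thus ?case by (metis mpow.simps(2) mpow_Suc_right)
qed

lemma evol_madj: assumes "hermitian H" shows "madj (evol H t) = evol H (- t)"
proof -
  have "madj (evol H t) $ i $ j = evol H (- t) $ i $ j" for i j
  proof -
    have "(\<lambda>k. ea H j i k * (of_real t)^k) sums (evol H t $ j $ i)"
      unfolding evol_entry using ea_summable by (rule summable_sums)
    hence "(\<lambda>k. cnj (ea H j i k * (of_real t)^k)) sums cnj (evol H t $ j $ i)"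
      by (simp only: sums_cnj)
    moreover have "cnj (ea H j i k * (of_real t)^k) = ea H i j k * (of_real (- t))^k" for k
    proof -
      have "cnj (mpow H k $ j $ i) = mpow H k $ i $ j"
        using madj_mpow[OF assms, of k] by (simp add: vec_eq_iff madj_def)
      moreover have "cnj ((- \<i>)^k) * (of_real t)^k = (- \<i>)^k * (of_real (- t))^k"
        by (simp add: power_mult_distrib[symmetric])
      ultimately show ?thesis by (simp add: ea_def power_mult_distrib[symmetric])
    qed
    ultimately have "(\<lambda>k. ea H i j k * (of_real (- t))^k) sums cnj (evol H t $ j $ i)" by simp
    thus ?thesis by (simp add: madj_def evol_entry[of H "-t"] sums_iff)
  qed
  thus ?thesis by (simp add: vec_eq_iff)
qed


lemma sum_UNIV_prod: "(\<Sum>p\<in>(UNIV::('a::finite \<times> 'b::finite) set). f p) = (\<Sum>a\<in>UNIV. \<Sum>b\<in>UNIV. f (a,b))"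
  by (simp add: sum.cartesian_product UNIV_Times_UNIV[symmetric] del: UNIV_Times_UNIV)

lemma kron_mm: "kron (A::'s::finite op) (B::'e::finite op) ** kron C D = kron (A ** C) (B ** D)"
proof -
  have "(kron A B ** kron C D) $ p $ q = kron (A ** C) (B ** D) $ p $ q" for p q
  proof -
    have "(kron A B ** kron C D) $ p $ q = (\<Sum>a\<in>UNIV. \<Sum>b\<in>UNIV. (A $ fst p $ a * C $ a $ fst q) * (B $ snd p $ b * D $ b $ snd q))"
      by (simp add: matrix_matrix_mult_def kron_def sum_UNIV_prod algebra_simps)
    also have "\<dots> = kron (A ** C) (B ** D) $ p $ q"
      by (simp add: matrix_matrix_mult_def kron_def sum_product)
    finally show ?thesis .
  qed
  thus ?thesis by (simp add: vec_eq_iff)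
qed

lemma kron_add_left: "kron (A + A') B = kron A B + kron A' B"
  by (simp add: vec_eq_iff kron_def algebra_simps)
lemma kron_add_right: "kron A (B + B') = kron A B + kron A B'"
  by (simp add: vec_eq_iff kron_def algebra_simps)
lemma kron_scaleR_left: "kron (c *\<^sub>R A) B = c *\<^sub>R kron A B"
  by (simp add: vec_eq_iff kron_def)
lemma kron_scaleR_right: "kron A (c *\<^sub>R B) = c *\<^sub>R kron A B"
  by (simp add: vec_eq_iff kron_def)
lemma kron_msc_left: "kron (msc c A) B = msc c (kron A B)"
  by (simp add: vec_eq_iff kron_def msc_def)
lemma kron_msc_right: "kron A (msc c B) = msc c (kron A B)"
  by (simp add: vec_eq_iff kron_def msc_def)
lemma kron_one: "kron (mat 1 :: 's::finite op) (mat 1 :: 'e::finite op) = mat 1"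
  by (simp add: vec_eq_iff kron_def mat_def prod_eq_iff)

lemma bilinear_kron: "bilinear (kron :: 's::finite op \<Rightarrow> 'e::finite op \<Rightarrow> _)"
  unfolding bilinear_def
  by (auto intro!: linearI simp: kron_add_left kron_add_right kron_scaleR_left kron_scaleR_right)

lemma bb_kron: "bounded_bilinear (kron :: 's::finite op \<Rightarrow> 'e::finite op \<Rightarrow> _)"
  using bilinear_kron bilinear_conv_bounded_bilinear by blast

lemma msc_mm_left: "msc c A ** (B::'a::finite op) = msc c (A ** B)"
  by (simp add: vec_eq_iff matrix_matrix_mult_def msc_def sum_distrib_left algebra_simps)
lemma msc_mm_right: "(A::'a::finite op) ** msc c B = msc c (A ** B)"
  by (simp add: vec_eq_iff matrix_matrix_mult_def msc_def sum_distrib_left algebra_simps)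
lemma msc_add: "msc c (A + B) = msc c A + msc c B"
  by (simp add: vec_eq_iff msc_def algebra_simps)
lemma msc_diff: "msc c (A - B) = msc c A - msc c B"
  by (simp add: vec_eq_iff msc_def algebra_simps)
lemma msc_neg: "- msc c A = msc c (- A)"
  by (simp add: vec_eq_iff msc_def algebra_simps)
lemma msc_msc: "msc c (msc d A) = msc (c * d) A"
  by (simp add: vec_eq_iff msc_def algebra_simps)
lemma msc_one: "msc 1 A = A"
  by (simp add: vec_eq_iff msc_def)

definition H0 :: "'s::finite op \<Rightarrow> 'e::finite op \<Rightarrow> ('s \<times> 'e) op" where
  "H0 HS HE = kron HS (mat 1) + kron (mat 1) HE"

definition U0 :: "'s::finite op \<Rightarrow> 'e::finite op \<Rightarrow> real \<Rightarrow> ('s \<times> 'e) op" where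
  "U0 HS HE t = kron (evol HS t) (evol HE t)"

lemma U0_inv: "U0 HS HE (- t) ** U0 HS HE t = mat 1"
  by (simp add: U0_def kron_mm evol_inv kron_one)
lemma U0_inv': "U0 HS HE t ** U0 HS HE (- t) = mat 1"
  by (simp add: U0_def kron_mm evol_inv' kron_one)

lemma U0_comm: "mi (H0 HS HE) ** U0 HS HE t = U0 HS HE t ** mi (H0 HS HE)"
proof -
  have "mi (H0 HS HE) ** U0 HS HE t = kron (mi HS ** evol HS t) (evol HE t) + kron (evol HS t) (mi HE ** evol HE t)"
    by (simp add: H0_def U0_def msc_add mm_add_left kron_mm kron_msc_left kron_msc_right msc_mm_left)
  also have "\<dots> = kron (evol HS t ** mi HS) (evol HE t) + kron (evol HS t) (evol HE t ** mi HE)"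
    by (simp add: evol_comm)
  also have "\<dots> = U0 HS HE t ** mi (H0 HS HE)"
    by (simp add: H0_def U0_def msc_add matrix_add_ldistrib kron_mm kron_msc_left kron_msc_right msc_mm_right)
  finally show ?thesis .
qed

lemma U0_deriv: "((\<lambda>t. U0 HS HE t) has_vector_derivative mi (H0 HS HE) ** U0 HS HE t) (at t within S)"
proof -
  have "((\<lambda>t. U0 HS HE t) has_vector_derivative kron (evol HS t) (mi HE ** evol HE t) + kron (mi HS ** evol HS t) (evol HE t)) (at t within S)"
    unfolding U0_def by (rule bounded_bilinear.has_vector_derivative[OF bb_kron evol_deriv evol_deriv])
  moreover have "kron (evol HS t) (mi HE ** evol HE t) + kron (mi HS ** evol HS t) (evol HE t) = mi (H0 HS HE) ** U0 HS HE t"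
    by (simp add: H0_def U0_def msc_add mm_add_left kron_mm kron_msc_left kron_msc_right msc_mm_left)
  ultimately show ?thesis by simp
qed

lemma U0_deriv_neg: "((\<lambda>t. U0 HS HE (- t)) has_vector_derivative - (U0 HS HE (- t) ** mi (H0 HS HE))) (at t within S)"
proof -
  have 1: "((\<lambda>t. - t) has_vector_derivative (-1)) (at t within S)"
    by (auto intro!: derivative_eq_intros simp: has_real_derivative_iff_has_vector_derivative[symmetric])
  show ?thesis using vector_diff_chain_within[OF 1 U0_deriv[of HS HE "-t" "uminus ` S"]]
    by (simp add: o_def U0_comm)
qed

lemma evol_deriv_neg':
  "((\<lambda>t. evol H (- t)) has_vector_derivative - (evol H (- t) ** mi H)) (at t within S)"
  using evol_deriv_neg[of H t S] by (simp add: evol_comm)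


lemma if_mult1: "(if P then 1 else 0) * (x::complex) = (if P then x else 0)"
  "x * (if P then 1 else 0) = (if P then x else 0)"
  "(if P then 1 else 0) * x * y = (if P then x * y else 0)"
  "(if P then z else 0) * x = (if P then z * x else 0)"
  "x * (if P then z else 0) = (if P then x * z else 0)"
  by auto

lemma sum_if_const: "(\<Sum>b\<in>A. if P then g b else 0) = (if P then \<Sum>b\<in>A. g b else 0)"
  by auto

lemma ptrace_kron_left: "ptraceE (kron A (mat 1) ** Y) = A ** ptraceE Y"
proof -
  have "ptraceE (kron A (mat 1) ** Y) $ i $ j = (A ** ptraceE Y) $ i $ j" for i j
  proof -
    have "ptraceE (kron A (mat 1) ** Y) $ i $ j = (\<Sum>e\<in>UNIV. \<Sum>i'\<in>UNIV. A $ i $ i' * Y $ (i', e) $ (j, e))"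
      by (simp add: ptraceE_def matrix_matrix_mult_def kron_def sum_UNIV_prod mat_def if_mult1 sum_if_const cong: if_cong)
    also have "\<dots> = (A ** ptraceE Y) $ i $ j"
      by (simp add: ptraceE_def matrix_matrix_mult_def sum_distrib_left) (rule sum.swap)
    finally show ?thesis .
  qed
  thus ?thesis by (simp add: vec_eq_iff)
qed

lemma ptrace_kron_right: "ptraceE (Y ** kron C (mat 1)) = ptraceE Y ** C"
proof -
  have "ptraceE (Y ** kron C (mat 1)) $ i $ j = (ptraceE Y ** C) $ i $ j" for i j
  proof -
    have "ptraceE (Y ** kron C (mat 1)) $ i $ j = (\<Sum>e\<in>UNIV. \<Sum>j'\<in>UNIV. Y $ (i, e) $ (j', e) * C $ j' $ j)"
      by (simp add: ptraceE_def matrix_matrix_mult_def kron_def sum_UNIV_prod mat_def if_mult1 sum_if_const cong: if_cong)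
    also have "\<dots> = (ptraceE Y ** C) $ i $ j"
      by (simp add: ptraceE_def matrix_matrix_mult_def sum_distrib_right) (rule sum.swap)
    finally show ?thesis .
  qed
  thus ?thesis by (simp add: vec_eq_iff)
qed

lemma ptrace_cyc: "ptraceE (kron (mat 1) B ** Y) = ptraceE (Y ** kron (mat 1) B)"
proof -
  have "ptraceE (kron (mat 1) B ** Y) $ i $ j = ptraceE (Y ** kron (mat 1) B) $ i $ j" for i j
  proof -
    have "ptraceE (kron (mat 1) B ** Y) $ i $ j = (\<Sum>e\<in>UNIV. \<Sum>f\<in>UNIV. B $ e $ f * Y $ (i, f) $ (j, e))"
      by (simp add: ptraceE_def matrix_matrix_mult_def kron_def sum_UNIV_prod mat_def if_mult1 sum_if_const cong: if_cong)
    also have "\<dots> = (\<Sum>f\<in>UNIV. \<Sum>e\<in>UNIV. Y $ (i, f) $ (j, e) * B $ e $ f)"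
      by (subst sum.swap) (simp add: mult.commute)
    also have "\<dots> = ptraceE (Y ** kron (mat 1) B) $ i $ j"
      by (simp add: ptraceE_def matrix_matrix_mult_def kron_def sum_UNIV_prod mat_def if_mult1 sum_if_const cong: if_cong)
    finally show ?thesis .
  qed
  thus ?thesis by (simp add: vec_eq_iff)
qed

lemma ptrace_conj:
  assumes "D ** B = mat 1"
  shows "ptraceE (kron A B ** Y ** kron C D) = A ** ptraceE Y ** C"
proof -
  have kA: "kron A B = kron A (mat 1) ** kron (mat 1) B" by (simp add: kron_mm)
  have kC: "kron C D = kron (mat 1) D ** kron C (mat 1)" by (simp add: kron_mm)
  have "kron A B ** Y ** kron C D = kron A (mat 1) ** ((kron (mat 1) B ** (Y ** kron (mat 1) D)) ** kron C (mat 1))"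
    by (simp only: kA kC matrix_mul_assoc)
  hence "ptraceE (kron A B ** Y ** kron C D) = ptraceE (kron A (mat 1) ** ((kron (mat 1) B ** (Y ** kron (mat 1) D)) ** kron C (mat 1)))"
    by simp
  also have "\<dots> = A ** ptraceE ((kron (mat 1) B ** (Y ** kron (mat 1) D)) ** kron C (mat 1))"
    by (rule ptrace_kron_left)
  also have "\<dots> = A ** ptraceE (kron (mat 1) B ** (Y ** kron (mat 1) D)) ** C"
    by (simp only: ptrace_kron_right matrix_mul_assoc)
  also have "ptraceE (kron (mat 1) B ** (Y ** kron (mat 1) D)) = ptraceE Y"
  proof -
    have "ptraceE (kron (mat 1) B ** (Y ** kron (mat 1) D)) = ptraceE ((Y ** kron (mat 1) D) ** kron (mat 1) B)"
      by (rule ptrace_cyc)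
    also have "(Y ** kron (mat 1) D) ** kron (mat 1) B = Y"
      by (simp only: matrix_mul_assoc[symmetric] kron_mm assms) (simp add: kron_one)
    finally show ?thesis .
  qed
  finally show ?thesis .
qed


definition Vk :: "'s::finite op \<Rightarrow> 'e::finite op \<Rightarrow> ('s \<times> 'e) op" where
  "Vk VS VE = kron VS VE"

definition Pt :: "'s::finite op \<Rightarrow> 's op \<Rightarrow> 'e::finite op \<Rightarrow> 'e op \<Rightarrow> ('s \<times> 'e) op \<Rightarrow> real \<Rightarrow> ('s \<times> 'e) op" where
  "Pt HS VS HE VE r t = (U0 HS HE (- t) ** evol (HSE HS VS HE VE) t) ** r ** (evol (HSE HS VS HE VE) (- t) ** U0 HS HE t)"

definition HI :: "'s::finite op \<Rightarrow> 's op \<Rightarrow> 'e::finite op \<Rightarrow> 'e op \<Rightarrow> real \<Rightarrow> ('s \<times> 'e) op" where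
  "HI HS VS HE VE t = U0 HS HE (- t) ** Vk VS VE ** U0 HS HE t"

definition Lop :: "'s::finite op \<Rightarrow> 's op \<Rightarrow> 'e::finite op \<Rightarrow> 'e op \<Rightarrow> real \<Rightarrow> ('s \<times> 'e) op \<Rightarrow> ('s \<times> 'e) op" where
  "Lop HS VS HE VE t X = HI HS VS HE VE t ** X - X ** HI HS VS HE VE t"

lemma HSE_split: "mi (HSE HS VS HE VE) = mi (H0 HS HE) + mi (Vk VS VE)"
  by (simp add: HSE_def H0_def Vk_def msc_add algebra_simps)

lemma U0_cancel: "X ** U0 HS HE t ** U0 HS HE (- t) = X"
  by (simp add: matrix_mul_assoc[symmetric] U0_inv')

lemma Pt_deriv:
  "((\<lambda>t. Pt HS VS HE VE r t) has_vector_derivative msc (- \<i>) (Lop HS VS HE VE t (Pt HS VS HE VE r t))) (at t within S)"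
proof -
  let ?a = "U0 HS HE (- t)" and ?b = "U0 HS HE t" and ?u = "evol (HSE HS VS HE VE) t"
    and ?w = "evol (HSE HS VS HE VE) (- t)" and ?m0 = "mi (H0 HS HE)" and ?mV = "mi (Vk VS VE)"
    and ?mH = "mi (HSE HS VS HE VE)"
  have D1: "((\<lambda>t. U0 HS HE (- t) ** evol (HSE HS VS HE VE) t) has_vector_derivative ?a ** (?mV ** ?u)) (at t within S)"
  proof -
    have "((\<lambda>t. U0 HS HE (- t) ** evol (HSE HS VS HE VE) t) has_vector_derivative ?a ** (?mH ** ?u) + (- (?a ** ?m0)) ** ?u) (at t within S)"
      by (rule bounded_bilinear.has_vector_derivative[OF bb_mm U0_deriv_neg evol_deriv])
    moreover have "?a ** (?mH ** ?u) + (- (?a ** ?m0)) ** ?u = ?a ** (?mV ** ?u)"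
      by (simp add: HSE_split mm_add_left matrix_add_ldistrib matrix_mul_assoc bounded_bilinear.minus_left[OF bb_mm])
    ultimately show ?thesis by simp
  qed
  have D2: "((\<lambda>t. evol (HSE HS VS HE VE) (- t) ** U0 HS HE t) has_vector_derivative - (?w ** (?mV ** ?b))) (at t within S)"
  proof -
    have "((\<lambda>t. evol (HSE HS VS HE VE) (- t) ** U0 HS HE t) has_vector_derivative ?w ** (?m0 ** ?b) + (- (?w ** ?mH)) ** ?b) (at t within S)"
      by (rule bounded_bilinear.has_vector_derivative[OF bb_mm evol_deriv_neg' U0_deriv])
    moreover have "?w ** (?m0 ** ?b) + (- (?w ** ?mH)) ** ?b = - (?w ** (?mV ** ?b))"
      by (simp add: HSE_split mm_add_left matrix_add_ldistrib matrix_mul_assoc bounded_bilinear.minus_left[OF bb_mm]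
          bounded_bilinear.minus_right[OF bb_mm] mm_diff_left)
    ultimately show ?thesis by simp
  qed
  have D3: "((\<lambda>t. (U0 HS HE (- t) ** evol (HSE HS VS HE VE) t) ** r) has_vector_derivative (?a ** (?mV ** ?u)) ** r) (at t within S)"
    using bounded_bilinear.has_vector_derivative[OF bb_mm D1 has_vector_derivative_const[of r]]
    by (simp add: bounded_bilinear.zero_right[OF bb_mm])
  have D4: "((\<lambda>t. Pt HS VS HE VE r t) has_vector_derivative ((?a ** ?u) ** r) ** (- (?w ** (?mV ** ?b))) + ((?a ** (?mV ** ?u)) ** r) ** (?w ** ?b)) (at t within S)"
    unfolding Pt_def by (rule bounded_bilinear.has_vector_derivative[OF bb_mm D3 D2])
  have "((?a ** ?u) ** r) ** (- (?w ** (?mV ** ?b))) + ((?a ** (?mV ** ?u)) ** r) ** (?w ** ?b)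
      = msc (- \<i>) (Lop HS VS HE VE t (Pt HS VS HE VE r t))"
    by (simp add: Lop_def HI_def Pt_def matrix_mul_assoc bounded_bilinear.minus_right[OF bb_mm]
         msc_mm_left msc_mm_right msc_diff U0_cancel Vk_def)
  with D4 show ?thesis by simp
qed

lemma Pt_0: "Pt HS VS HE VE r 0 = r"
  by (simp add: Pt_def U0_def evol_0 kron_one)

lemma U0_cont: "continuous_on S (\<lambda>t. U0 HS HE t)"
  by (intro continuous_at_imp_continuous_on ballI has_vector_derivative_continuous[OF U0_deriv])

lemma HI_cont: "continuous_on S (\<lambda>t. HI HS VS HE VE t)"
proof -
  have "continuous_on S (\<lambda>t. U0 HS HE (- t))"
    by (intro continuous_at_imp_continuous_on ballI has_vector_derivative_continuous[OF U0_deriv_neg])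
  thus ?thesis unfolding HI_def
    by (intro bounded_bilinear.continuous_on[OF bb_mm] U0_cont continuous_on_const)
qed

lemma Pt_cont: "continuous_on S (\<lambda>t. Pt HS VS HE VE r t)"
  by (intro continuous_at_imp_continuous_on ballI has_vector_derivative_continuous[OF Pt_deriv])

lemma Pt_integral:
  assumes "0 \<le> t"
  shows "((\<lambda>s. msc (- \<i>) (Lop HS VS HE VE s (Pt HS VS HE VE r s))) has_integral (Pt HS VS HE VE r t - r)) {0..t}"
proof -
  have "((\<lambda>s. msc (- \<i>) (Lop HS VS HE VE s (Pt HS VS HE VE r s))) has_integral
      (Pt HS VS HE VE r t - Pt HS VS HE VE r 0)) {0..t}"
    by (rule fundamental_theorem_of_calculus[OF assms]) (rule Pt_deriv)
  thus ?thesis by (simp add: Pt_0)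
qed

lemma rhoSI_Pt:
  "rhoSI HS VS HE VE rhoS rhoE t = ptraceE (Pt HS VS HE VE (kron rhoS rhoE) t)"
proof -
  have "Pt HS VS HE VE (kron rhoS rhoE) t = kron (evol HS (- t)) (evol HE (- t)) **
      (evol (HSE HS VS HE VE) t ** kron rhoS rhoE ** evol (HSE HS VS HE VE) (- t)) ** kron (evol HS t) (evol HE t)"
    by (simp add: Pt_def U0_def matrix_mul_assoc)
  thus ?thesis by (simp add: rhoSI_def ptrace_conj evol_inv')
qed


primrec Aseq :: "(real \<Rightarrow> 'n::finite op \<Rightarrow> 'n op) \<Rightarrow> 'n op \<Rightarrow> nat \<Rightarrow> real \<Rightarrow> 'n op" where
  "Aseq L P0 0 t = P0"
| "Aseq L P0 (Suc k) t = integral {0..t} (\<lambda>s. L s (Aseq L P0 k s))"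

primrec Rseq :: "(real \<Rightarrow> 'n::finite op \<Rightarrow> 'n op) \<Rightarrow> (real \<Rightarrow> 'n op) \<Rightarrow> nat \<Rightarrow> real \<Rightarrow> 'n op" where
  "Rseq L P 0 t = P t"
| "Rseq L P (Suc k) t = integral {0..t} (\<lambda>s. L s (Rseq L P k s))"

lemma linear_msc: "linear (msc c :: 'n::finite op \<Rightarrow> 'n op)"
  by (auto intro!: linearI simp: msc_add vec_eq_iff msc_def scaleR_conv_of_real algebra_simps)

lemma bl_msc: "bounded_linear (msc c :: 'n::finite op \<Rightarrow> 'n op)"
  using linear_msc linear_conv_bounded_linear by blast

lemma cont_indef:
  fixes f :: "real \<Rightarrow> 'a::banach"
  assumes "continuous_on {0..T} f"
  shows "continuous_on {0..T} (\<lambda>t. integral {0..t} f)"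
  using indefinite_integral_continuous_1[OF integrable_continuous_interval[OF assms]] .

lemma int_sub:
  fixes f :: "real \<Rightarrow> 'a::banach"
  assumes "continuous_on {0..T} f" "t \<in> {0..T}"
  shows "f integrable_on {0..t}"
  using assms by (intro integrable_continuous_interval) (auto elim: continuous_on_subset)

lemma power_has_integral:
  assumes "0 \<le> t"
  shows "((\<lambda>s::real. c * s^k) has_integral c * t^(Suc k) / Suc k) {0..t}"
proof -
  have "((\<lambda>s. c / Suc k * s^Suc k) has_vector_derivative c * x^k) (at x within {0..t})" for x
  proof -
    have "((\<lambda>s. c / Suc k * s^Suc k) has_real_derivative c / Suc k * (real (Suc k) * x^k)) (at x within {0..t})"
      using DERIV_cmult[OF DERIV_pow[of "Suc k" x "{0..t}"], of "c / Suc k"] by simp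
    moreover have "c / Suc k * (real (Suc k) * x^k) = c * x^k" by (simp del: of_nat_Suc)
    ultimately show ?thesis by (simp add: has_real_derivative_iff_has_vector_derivative)
  qed
  from fundamental_theorem_of_calculus[OF assms this] show ?thesis by (simp add: field_simps)
qed

lemma picard:
  fixes L :: "real \<Rightarrow> 'n::finite op \<Rightarrow> 'n op" and \<psi> :: "'n op \<Rightarrow> complex"
  assumes add: "\<And>s X Y. L s (X + Y) = L s X + L s Y"
    and hom: "\<And>s c X. L s (msc c X) = msc c (L s X)"
    and cont: "\<And>X. continuous_on {0..T} X \<Longrightarrow> continuous_on {0..T} (\<lambda>s. L s (X s))"
    and bnd: "\<And>s X. s \<in> {0..T} \<Longrightarrow> norm (L s X) \<le> C * norm X"
    and C: "0 \<le> C"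
    and Pc: "continuous_on {0..T} P"
    and Peq: "\<And>t. t \<in> {0..T} \<Longrightarrow> P t = P0 + msc (- \<i>) (integral {0..t} (\<lambda>s. L s (P s)))"
    and psi: "bounded_linear \<psi>" and psi_hom: "\<And>c X. \<psi> (msc c X) = c * \<psi> X"
    and t: "t \<in> {0..T}"
  shows "(\<lambda>k. (- \<i>)^k * \<psi> (Aseq L P0 k t)) sums \<psi> (P t)"
proof -
  have contA: "continuous_on {0..T} (Aseq L P0 k)" for k
    by (induction k) (auto intro!: cont_indef cont simp: continuous_on_const)
  have contR: "continuous_on {0..T} (Rseq L P k)" for k
    by (induction k) (auto intro!: cont_indef cont simp: Pc)
  have rel: "Rseq L P k t = Aseq L P0 k t + msc (- \<i>) (Rseq L P (Suc k) t)" if "t \<in> {0..T}" for k t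
    using that
  proof (induction k arbitrary: t)
    case 0 thus ?case using Peq by simp
  next
    case (Suc k)
    have "Rseq L P (Suc k) t = integral {0..t} (\<lambda>s. L s (Aseq L P0 k s) + msc (- \<i>) (L s (Rseq L P (Suc k) s)))"
      using Suc by (auto intro!: integral_cong simp: add hom)
    also have "\<dots> = integral {0..t} (\<lambda>s. L s (Aseq L P0 k s)) + integral {0..t} (\<lambda>s. msc (- \<i>) (L s (Rseq L P (Suc k) s)))"
    proof (rule Henstock_Kurzweil_Integration.integral_add)
      show "(\<lambda>s. L s (Aseq L P0 k s)) integrable_on {0..t}"
        by (intro int_sub[where T=T] cont contA Suc.prems)
      show "(\<lambda>s. msc (- \<i>) (L s (Rseq L P (Suc k) s))) integrable_on {0..t}"
        by (intro int_sub[where T=T] bounded_linear.continuous_on[OF bl_msc] cont contR Suc.prems)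
    qed
    also have "integral {0..t} (\<lambda>s. msc (- \<i>) (L s (Rseq L P (Suc k) s))) = msc (- \<i>) (integral {0..t} (\<lambda>s. L s (Rseq L P (Suc k) s)))"
      using integral_linear[OF int_sub[OF cont[OF contR] Suc.prems] bl_msc] by (simp only: o_def)
    finally show ?case by simp
  qed
  have psi_add: "\<psi> (X + Y) = \<psi> X + \<psi> Y" for X Y using psi by (simp add: linear_simps)
  have expand: "\<psi> (P t) = (\<Sum>k<N. (- \<i>)^k * \<psi> (Aseq L P0 k t)) + (- \<i>)^N * \<psi> (Rseq L P N t)" for N
  proof (induction N)
    case 0 thus ?case by simp
  next
    case (Suc N)
    show ?case unfolding Suc using rel[OF t, of N] by (simp add: psi_add psi_hom algebra_simps)
  qed
  obtain B where B: "\<And>s. s \<in> {0..T} \<Longrightarrow> norm (P s) \<le> B" and B0: "0 \<le> B"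
  proof -
    have "bounded (P ` {0..T})" by (intro compact_imp_bounded compact_continuous_image Pc compact_Icc)
    then obtain B where "\<And>x. x \<in> P ` {0..T} \<Longrightarrow> norm x \<le> B" by (auto simp: bounded_iff)
    thus ?thesis using that[of "max B 0"] by fastforce
  qed
  have Rb: "norm (Rseq L P k s) \<le> B * C^k * s^k / fact k" if "s \<in> {0..T}" for k s
    using that
  proof (induction k arbitrary: s)
    case 0 thus ?case using B by simp
  next
    case (Suc k)
    have "norm (Rseq L P (Suc k) s) \<le> integral {0..s} (\<lambda>x. (C * (B * C^k / fact k)) * x^k)"
    proof (unfold Rseq.simps, rule integral_norm_bound_integral)
      show "(\<lambda>x. L x (Rseq L P k x)) integrable_on {0..s}" by (intro int_sub[where T=T] cont contR Suc.prems)
      show "(\<lambda>x. (C * (B * C^k / fact k)) * x^k) integrable_on {0..s}"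
        using power_has_integral[of s] Suc.prems by auto
      fix x assume x: "x \<in> {0..s}"
      hence xT: "x \<in> {0..T}" using Suc.prems by auto
      have "norm (L x (Rseq L P k x)) \<le> C * norm (Rseq L P k x)" using bnd xT by blast
      also have "\<dots> \<le> C * (B * C^k * x^k / fact k)" by (intro mult_left_mono Suc.IH xT C)
      finally show "norm (L x (Rseq L P k x)) \<le> (C * (B * C^k / fact k)) * x^k" by simp
    qed
    also have "\<dots> = (C * (B * C^k / fact k)) * s^Suc k / Suc k"
      using Suc.prems by (intro integral_unique power_has_integral) auto
    also have "\<dots> = B * C^Suc k * s^Suc k / fact (Suc k)"
      by (simp add: fact_Suc field_simps del: of_nat_Suc)
    finally show ?case .
  qed
  obtain K where K: "\<And>X. norm (\<psi> X) \<le> norm X * K" and K0: "0 < K"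
    using bounded_linear.pos_bounded[OF psi] by blast
  have "(\<lambda>N. inverse (fact N) * (C * t)^N) \<longlonglongrightarrow> 0"
    by (rule summable_LIMSEQ_zero[OF summable_exp])
  hence "(\<lambda>N. (C * t)^N / fact N) \<longlonglongrightarrow> 0"
    by (simp add: divide_inverse mult.commute)
  hence "(\<lambda>N. B * ((C * t)^N / fact N) * K) \<longlonglongrightarrow> B * 0 * K"
    by (intro tendsto_mult tendsto_const)
  hence lim0: "(\<lambda>N. B * ((C * t)^N / fact N) * K) \<longlonglongrightarrow> 0"
    by simp
  have "(\<lambda>N. (- \<i>)^N * \<psi> (Rseq L P N t)) \<longlonglongrightarrow> 0"
  proof (rule tendsto_norm_zero_cancel, rule Lim_null_comparison[OF _ lim0])
    show "\<forall>\<^sub>F N in sequentially. norm (norm ((- \<i>)^N * \<psi> (Rseq L P N t))) \<le> B * ((C * t)^N / fact N) * K"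
    proof (rule always_eventually, rule allI)
      fix N
      have "norm (norm ((- \<i>)^N * \<psi> (Rseq L P N t))) = norm (\<psi> (Rseq L P N t))"
        by (simp add: norm_mult norm_power)
      also have "\<dots> \<le> norm (Rseq L P N t) * K" by (rule K)
      also have "\<dots> \<le> (B * C^N * t^N / fact N) * K"
      proof (rule mult_right_mono[OF Rb[OF t]])
        show "0 \<le> K" using K0 by simp
      qed
      finally show "norm (norm ((- \<i>)^N * \<psi> (Rseq L P N t))) \<le> B * ((C * t)^N / fact N) * K"
        by (simp add: power_mult_distrib)
    qed
  qed
  hence "(\<lambda>N. \<psi> (P t) - (- \<i>)^N * \<psi> (Rseq L P N t)) \<longlonglongrightarrow> \<psi> (P t) - 0"
    by (intro tendsto_diff tendsto_const)
  moreover have "(\<lambda>N. \<psi> (P t) - (- \<i>)^N * \<psi> (Rseq L P N t)) = (\<lambda>N. \<Sum>k<N. (- \<i>)^k * \<psi> (Aseq L P0 k t))"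
    using expand by (auto simp: algebra_simps)
  ultimately show ?thesis unfolding sums_def by simp
qed


definition ip :: "complex^'e::finite \<Rightarrow> complex^'e \<Rightarrow> complex" where
  "ip x y = (\<Sum>e\<in>UNIV. cnj (x$e) * y$e)"

lemma braket_ip: "braket x A y = ip x (A *v y)"
  by (simp add: braket_def ip_def matrix_vector_mult_def sum_distrib_left mult.assoc)

lemma ip_cnj: "cnj (ip x y) = ip y x"
  by (simp add: ip_def mult.commute)

lemma ip_mv: "ip (A *v x) y = ip x (madj A *v y)"
proof -
  have "ip (A *v x) y = (\<Sum>e\<in>UNIV. \<Sum>f\<in>UNIV. cnj (A$e$f) * cnj (x$f) * y$e)"
    by (simp add: ip_def matrix_vector_mult_def sum_distrib_right)
  also have "\<dots> = (\<Sum>f\<in>UNIV. \<Sum>e\<in>UNIV. cnj (A$e$f) * cnj (x$f) * y$e)" by (rule sum.swap)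
  also have "\<dots> = ip x (madj A *v y)"
    by (simp add: ip_def matrix_vector_mult_def madj_def sum_distrib_left algebra_simps)
  finally show ?thesis .
qed

lemma ip_smult_right: "ip x (c *s y) = c * ip x y"
  by (simp add: ip_def sum_distrib_left algebra_simps)

lemma complete:
  fixes f :: "'e::finite \<Rightarrow> complex^'e"
  assumes "orthonormal_family f"
  shows "(\<Sum>n\<in>UNIV. f n $ e * cnj (f n $ e')) = (if e = e' then 1 else 0)"
proof -
  define F :: "complex^'e^'e" where "F = (\<chi> e n. f n $ e)"
  have "madj F ** F = mat 1"
    using assms by (simp add: vec_eq_iff madj_def F_def matrix_matrix_mult_def orthonormal_family_def mat_def)
  hence "F ** madj F = mat 1" using matrix_left_right_inverse by blast
  hence "(F ** madj F) $ e $ e' = mat 1 $ e $ e'" by simp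
  thus ?thesis by (simp add: madj_def F_def matrix_matrix_mult_def mat_def)
qed

lemma expand:
  fixes f :: "'e::finite \<Rightarrow> complex^'e"
  assumes "orthonormal_family f"
  shows "w = (\<Sum>n\<in>UNIV. ip (f n) w *s f n)"
proof -
  have "(\<Sum>n\<in>UNIV. ip (f n) w *s f n) $ e' = w $ e'" for e'
  proof -
    have "(\<Sum>n\<in>UNIV. ip (f n) w *s f n) $ e' = (\<Sum>n\<in>UNIV. \<Sum>e\<in>UNIV. cnj (f n $ e) * w $ e * f n $ e')"
      by (simp add: sum_component ip_def sum_distrib_right)
    also have "\<dots> = (\<Sum>e\<in>UNIV. \<Sum>n\<in>UNIV. w $ e * (f n $ e' * cnj (f n $ e)))"
      by (subst sum.swap) (simp add: algebra_simps)
    also have "\<dots> = (\<Sum>e\<in>UNIV. w $ e * (if e' = e then 1 else 0))"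
      by (simp add: sum_distrib_left[symmetric] complete[OF assms])
    also have "\<dots> = w $ e'" by (simp add: if_mult1 cong: if_cong)
    finally show ?thesis .
  qed
  thus ?thesis by (simp add: vec_eq_iff)
qed

definition nk :: "'e::finite op \<Rightarrow> ('e \<Rightarrow> complex^'e) \<Rightarrow> real \<Rightarrow> 'e \<Rightarrow> complex^'e" where
  "nk HE b u n = evol HE (- u) *v b n"

lemma ip_nk:
  assumes "hermitian HE"
  shows "ip (nk HE b u n) (nk HE b s m) = braket (b n) (evol HE (u - s)) (b m)"
proof -
  have "ip (nk HE b u n) (nk HE b s m) = ip (b n) ((evol HE u ** evol HE (- s)) *v b m)"
    by (simp add: nk_def ip_mv evol_madj[OF assms] matrix_vector_mul_assoc)
  also have "evol HE u ** evol HE (- s) = evol HE (u - s)"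
    using evol_add[of HE u "- s"] by simp
  finally show ?thesis by (simp add: braket_ip)
qed

lemma ortho_nk:
  assumes "hermitian HE" "orthonormal_family b"
  shows "orthonormal_family (nk HE b u)"
proof -
  have "ip (nk HE b u n) (nk HE b u m) = ip (b n) (b m)" for n m
    by (simp add: ip_nk[OF assms(1)] evol_0 braket_ip)
  hence "ip (nk HE b u n) (nk HE b u m) = (if n = m then 1 else 0)" for n m
    using assms(2) by (simp add: orthonormal_family_def ip_def)
  thus ?thesis by (simp add: orthonormal_family_def ip_def)
qed

definition Bl :: "('s::finite \<times> 'e::finite) op \<Rightarrow> complex^'e \<Rightarrow> complex^'e \<Rightarrow> 's op" where
  "Bl X x y = (\<chi> i j. \<Sum>e\<in>UNIV. \<Sum>e'\<in>UNIV. cnj (x$e) * X$(i,e)$(j,e') * y$e')"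

lemma Bl_add_left: "Bl X (x + x') y = Bl X x y + Bl X x' y"
  by (simp add: Bl_def vec_eq_iff algebra_simps sum.distrib)
lemma Bl_add_right: "Bl X x (y + y') = Bl X x y + Bl X x y'"
  by (simp add: Bl_def vec_eq_iff algebra_simps sum.distrib)
lemma Bl_smult_left: "Bl X (c *s x) y = msc (cnj c) (Bl X x y)"
  by (simp add: Bl_def vec_eq_iff msc_def sum_distrib_left algebra_simps)
lemma Bl_smult_right: "Bl X x (c *s y) = msc c (Bl X x y)"
  by (simp add: Bl_def vec_eq_iff msc_def sum_distrib_left algebra_simps)
lemma Bl_zero_left: "Bl X 0 y = 0"
  by (simp add: Bl_def vec_eq_iff)
lemma Bl_zero_right: "Bl X x 0 = 0"
  by (simp add: Bl_def vec_eq_iff)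
lemma Bl_diff: "Bl (X - Y) x y = Bl X x y - Bl Y x y"
  by (simp add: Bl_def vec_eq_iff algebra_simps sum_subtractf)

lemma Bl_sum_left: "finite A \<Longrightarrow> Bl X (\<Sum>n\<in>A. f n) y = (\<Sum>n\<in>A. Bl X (f n) y)"
  by (induction A rule: finite_induct) (auto simp: Bl_zero_left Bl_add_left)
lemma Bl_sum_right: "finite A \<Longrightarrow> Bl X x (\<Sum>n\<in>A. f n) = (\<Sum>n\<in>A. Bl X x (f n))"
  by (induction A rule: finite_induct) (auto simp: Bl_zero_right Bl_add_right)


definition Kb :: "complex^'e::finite \<Rightarrow> complex^('s::finite \<times> 'e)^'s" where
  "Kb x = (\<chi> i p. if fst p = i then cnj (x $ snd p) else 0)"
definition Kv :: "complex^'e::finite \<Rightarrow> complex^'s::finite^('s \<times> 'e)" where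
  "Kv y = (\<chi> p j. if fst p = j then y $ snd p else 0)"

lemma Bl_K: "Bl X x y = Kb x ** X ** Kv y"
proof -
  have "Bl X x y $ i $ j = (Kb x ** X ** Kv y) $ i $ j" for i j
  proof -
    have "(Kb x ** X ** Kv y) $ i $ j = (\<Sum>e'\<in>UNIV. (\<Sum>e\<in>UNIV. cnj (x$e) * X$(i,e)$(j,e')) * y$e')"
      by (simp add: Kb_def Kv_def matrix_matrix_mult_def sum_UNIV_prod if_mult1 sum_if_const cong: if_cong)
    also have "\<dots> = Bl X x y $ i $ j"
      by (simp add: Bl_def sum_distrib_right) (rule sum.swap)
    finally show ?thesis by simp
  qed
  thus ?thesis by (simp add: vec_eq_iff)
qed

lemma Kb_kron: "Kb x ** kron A B = A ** Kb (madj B *v x)"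
  by (simp add: vec_eq_iff Kb_def kron_def matrix_matrix_mult_def sum_UNIV_prod if_mult1 sum_if_const
      matrix_vector_mult_def madj_def sum_distrib_left algebra_simps cong: if_cong)

lemma kron_Kv: "kron A B ** Kv y = Kv (B *v y) ** A"
  by (simp add: vec_eq_iff Kv_def kron_def matrix_matrix_mult_def sum_UNIV_prod if_mult1 sum_if_const
      matrix_vector_mult_def sum_distrib_left sum_distrib_right algebra_simps cong: if_cong)

lemma Kb_Kv: "(Kb x :: complex^('s::finite \<times> 'e::finite)^'s) ** Kv y = msc (ip x y) (mat 1)"
  by (simp add: vec_eq_iff Kb_def Kv_def matrix_matrix_mult_def sum_UNIV_prod if_mult1 sum_if_const
      msc_def mat_def ip_def cong: if_cong)

lemma Bl_kron_left: "Bl (kron A B ** X) x y = A ** Bl X (madj B *v x) y"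
  by (simp add: Bl_K matrix_mul_assoc Kb_kron)

lemma Bl_kron_right: "Bl (X ** kron A B) x y = Bl X x (B *v y) ** A"
  by (simp add: Bl_K matrix_mul_assoc[symmetric] kron_Kv)

lemma Bl_kron: "Bl (kron A B) x y = msc (ip x (B *v y)) A"
proof -
  have "Bl (kron A B) x y = A ** (Kb (madj B *v x) ** Kv y)"
    by (simp add: Bl_K Kb_kron matrix_mul_assoc)
  also have "\<dots> = msc (ip x (B *v y)) A"
    by (simp add: Kb_Kv ip_mv madj_madj msc_mm_right)
  finally show ?thesis .
qed

lemma msc_sum: "msc c (\<Sum>n\<in>A. f n) = (\<Sum>n\<in>A. msc c (f n))"
  by (simp add: vec_eq_iff msc_def sum_component sum_distrib_left)

lemma WS_alt: "WS HS VS x y t A = msc (of_real x) (VSt HS VS t ** A) - msc (of_real y) (A ** VSt HS VS t)"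
  by (simp add: WS_def vec_eq_iff msc_def field_simps)

lemma VE_eig:
  fixes b :: "'e::finite \<Rightarrow> complex^'e"
  assumes "orthonormal_family b" "VE = (\<Sum>n\<in>UNIV. msc (of_real (v n)) (ketbra (b n) (b n)))"
  shows "VE *v b n = of_real (v n) *s b n"
proof -
  have "(VE *v b n) $ e = (of_real (v n) *s b n) $ e" for e
  proof -
    have "(VE *v b n) $ e = (\<Sum>f\<in>UNIV. \<Sum>m\<in>UNIV. of_real (v m) * b m $ e * (cnj (b m $ f) * b n $ f))"
      by (simp add: assms(2) matrix_vector_mult_def msc_def ketbra_def sum_distrib_right sum_distrib_left algebra_simps)
    also have "\<dots> = (\<Sum>m\<in>UNIV. of_real (v m) * b m $ e * (\<Sum>f\<in>UNIV. cnj (b m $ f) * b n $ f))"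
      by (subst sum.swap) (simp add: sum_distrib_left algebra_simps)
    also have "\<dots> = (\<Sum>m\<in>UNIV. of_real (v m) * b m $ e * (if m = n then 1 else 0))"
      using assms(1) by (simp add: orthonormal_family_def)
    also have "\<dots> = (\<Sum>m\<in>UNIV. if m = n then of_real (v m) * b m $ e else 0)"
      by (rule sum.cong) auto
    also have "\<dots> = (of_real (v n) *s b n) $ e"
      by simp
    finally show ?thesis .
  qed
  thus ?thesis by (simp add: vec_eq_iff)
qed

definition VEt :: "'e::finite op \<Rightarrow> 'e op \<Rightarrow> real \<Rightarrow> 'e op" where
  "VEt HE VE t = evol HE (- t) ** VE ** evol HE t"

lemma HI_kron: "HI HS VS HE VE t = kron (VSt HS VS t) (VEt HE VE t)"
  by (simp add: HI_def U0_def Vk_def kron_mm VSt_def VEt_def)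

lemma VEt_nk:
  assumes "orthonormal_family b" "VE = (\<Sum>n\<in>UNIV. msc (of_real (v n)) (ketbra (b n) (b n)))"
  shows "VEt HE VE t *v nk HE b t n = of_real (v n) *s nk HE b t n"
proof -
  have "VEt HE VE t *v nk HE b t n = evol HE (- t) *v (VE *v ((evol HE t ** evol HE (- t)) *v b n))"
    by (simp add: VEt_def nk_def matrix_vector_mul_assoc matrix_mul_assoc)
  also have "\<dots> = of_real (v n) *s nk HE b t n"
    by (simp add: evol_inv' VE_eig[OF assms] vector_scalar_commute nk_def)
  finally show ?thesis .
qed

lemma madj_VEt:
  assumes "hermitian HE" "hermitian VE"
  shows "madj (VEt HE VE t) = VEt HE VE t"
  using assms by (simp add: VEt_def madj_mm evol_madj hermitian_def matrix_mul_assoc)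

lemma Bl_Lop:
  assumes "hermitian HE" "hermitian VE" "orthonormal_family b"
    "VE = (\<Sum>n\<in>UNIV. msc (of_real (v n)) (ketbra (b n) (b n)))"
  shows "Bl (Lop HS VS HE VE t X) (nk HE b t n) (nk HE b t m) = WS HS VS (v n) (v m) t (Bl X (nk HE b t n) (nk HE b t m))"
  by (simp add: Lop_def HI_kron Bl_diff Bl_kron_left Bl_kron_right madj_VEt[OF assms(1,2)]
      VEt_nk[OF assms(3,4)] Bl_smult_left Bl_smult_right WS_alt msc_mm_left msc_mm_right)

lemma Bl_change:
  assumes "hermitian HE" "orthonormal_family b"
  shows "Bl X (nk HE b u n) (nk HE b u m) =
    (\<Sum>n'\<in>UNIV. \<Sum>m'\<in>UNIV. msc (Tprop HE b (u - s) n m n' m') (Bl X (nk HE b s n') (nk HE b s m')))"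
proof -
  have on: "orthonormal_family (nk HE b s)" by (rule ortho_nk[OF assms])
  have e1: "nk HE b u n = (\<Sum>n'\<in>UNIV. ip (nk HE b s n') (nk HE b u n) *s nk HE b s n')"
    by (rule expand[OF on])
  have e2: "nk HE b u m = (\<Sum>m'\<in>UNIV. ip (nk HE b s m') (nk HE b u m) *s nk HE b s m')"
    by (rule expand[OF on])
  have "Bl X (nk HE b u n) (nk HE b u m) = Bl X (\<Sum>n'\<in>UNIV. ip (nk HE b s n') (nk HE b u n) *s nk HE b s n')
      (\<Sum>m'\<in>UNIV. ip (nk HE b s m') (nk HE b u m) *s nk HE b s m')"
    by (rule arg_cong2[where f="Bl X", OF e1 e2])
  also have "\<dots> = (\<Sum>n'\<in>UNIV. \<Sum>m'\<in>UNIV. msc (cnj (ip (nk HE b s n') (nk HE b u n)) * ip (nk HE b s m') (nk HE b u m))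
      (Bl X (nk HE b s n') (nk HE b s m')))"
    by (subst Bl_sum_left, simp, simp add: Bl_sum_right Bl_smult_left Bl_smult_right msc_sum msc_msc)
  also have "\<dots> = (\<Sum>n'\<in>UNIV. \<Sum>m'\<in>UNIV. msc (Tprop HE b (u - s) n m n' m') (Bl X (nk HE b s n') (nk HE b s m')))"
  proof -
    have "cnj (ip (nk HE b s n') (nk HE b u n)) * ip (nk HE b s m') (nk HE b u m) = Tprop HE b (u - s) n m n' m'" for n' m'
    proof -
      have a: "cnj (ip (nk HE b s n') (nk HE b u n)) = braket (b n) (evol HE (u - s)) (b n')"
        by (subst ip_cnj) (rule ip_nk[OF assms(1)])
      have "ip (nk HE b s m') (nk HE b u m) = cnj (ip (nk HE b u m) (nk HE b s m'))"
        by (simp only: ip_cnj)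
      hence b: "ip (nk HE b s m') (nk HE b u m) = cnj (braket (b m) (evol HE (u - s)) (b m'))"
        by (simp only: ip_nk[OF assms(1)])
      show ?thesis by (simp only: a b Tprop_def)
    qed
    thus ?thesis by simp
  qed
  finally show ?thesis .
qed

lemma ptrace_Bl:
  assumes "hermitian HE" "orthonormal_family b"
  shows "ptraceE X = (\<Sum>n\<in>UNIV. Bl X (nk HE b u n) (nk HE b u n))"
proof -
  have on: "orthonormal_family (nk HE b u)" by (rule ortho_nk[OF assms])
  have "ptraceE X $ i $ j = (\<Sum>n\<in>UNIV. Bl X (nk HE b u n) (nk HE b u n)) $ i $ j" for i j
  proof -
    have "(\<Sum>n\<in>UNIV. Bl X (nk HE b u n) (nk HE b u n)) $ i $ j =
        (\<Sum>n\<in>UNIV. \<Sum>e\<in>UNIV. \<Sum>e'\<in>UNIV. cnj (nk HE b u n $ e) * X$(i,e)$(j,e') * nk HE b u n $ e')"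
      by (simp add: Bl_def)
    also have "\<dots> = (\<Sum>e\<in>UNIV. \<Sum>n\<in>UNIV. \<Sum>e'\<in>UNIV. cnj (nk HE b u n $ e) * X$(i,e)$(j,e') * nk HE b u n $ e')"
      by (rule sum.swap)
    also have "\<dots> = (\<Sum>e\<in>UNIV. \<Sum>e'\<in>UNIV. X$(i,e)$(j,e') * (\<Sum>n\<in>UNIV. nk HE b u n $ e' * cnj (nk HE b u n $ e)))"
    proof (rule sum.cong[OF refl])
      fix e
      show "(\<Sum>n\<in>UNIV. \<Sum>e'\<in>UNIV. cnj (nk HE b u n $ e) * X$(i,e)$(j,e') * nk HE b u n $ e') =
          (\<Sum>e'\<in>UNIV. X$(i,e)$(j,e') * (\<Sum>n\<in>UNIV. nk HE b u n $ e' * cnj (nk HE b u n $ e)))"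
        by (subst sum.swap) (simp add: sum_distrib_left algebra_simps)
    qed
    also have "\<dots> = ptraceE X $ i $ j"
      by (simp add: complete[OF on] ptraceE_def if_mult1 cong: if_cong)
    finally show ?thesis by simp
  qed
  thus ?thesis by (simp add: vec_eq_iff)
qed

lemma Bl_rho:
  assumes "hermitian HE"
  shows "Bl (kron A rhoE) (nk HE b s n) (nk HE b s m) = msc (braket (b n) (evol HE s ** rhoE ** evol HE (- s)) (b m)) A"
  by (simp add: Bl_kron nk_def ip_mv evol_madj[OF assms] matrix_vector_mul_assoc braket_ip matrix_mul_assoc)


fun Lprod :: "(real \<Rightarrow> 'n op \<Rightarrow> 'n op) \<Rightarrow> real list \<Rightarrow> 'n op \<Rightarrow> 'n op" where
  "Lprod L [] X = X"
| "Lprod L (u # ts) X = L u (Lprod L ts X)"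

definition Ls :: "nat \<Rightarrow> 'a list set" where "Ls k = {xs. length xs = k}"

lemma Ls_finite: "finite (Ls k :: 'a::finite list set)"
proof -
  have "Ls k = {xs::'a list. set xs \<subseteq> UNIV \<and> length xs = k}" by (simp add: Ls_def)
  thus ?thesis using finite_lists_length_eq[of "UNIV::'a set" k] by simp
qed

lemma Ls_0: "Ls 0 = {[]}" by (auto simp: Ls_def)

lemma sum_Ls_Suc: "(\<Sum>xs\<in>Ls (Suc k). f xs) = (\<Sum>x\<in>(UNIV::'a::finite set). \<Sum>xs\<in>Ls k. f (x # xs))"
proof -
  have eq: "Ls (Suc k) = case_prod Cons ` (UNIV \<times> Ls k)"
    by (auto simp: Ls_def length_Suc_conv image_iff)
  have inj: "inj_on (case_prod Cons) (UNIV \<times> (Ls k :: 'a list set))" by (auto simp: inj_on_def)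
  have "(\<Sum>xs\<in>Ls (Suc k). f xs) = (\<Sum>p\<in>UNIV \<times> Ls k. f (case_prod Cons p))"
    unfolding eq by (rule sum.reindex[OF inj, unfolded o_def])
  also have "\<dots> = (\<Sum>x\<in>UNIV. \<Sum>xs\<in>Ls k. f (x # xs))"
    by (simp add: sum.cartesian_product split_def)
  finally show ?thesis .
qed

definition cc :: "'e::finite op \<Rightarrow> 'e op \<Rightarrow> ('e \<Rightarrow> complex^'e) \<Rightarrow> 'e list \<Rightarrow> 'e list \<Rightarrow> real list \<Rightarrow> complex" where
  "cc HE rhoE b ns ms ts = (let k = length ts in
     braket (b (ns!(k-1))) (evol HE (ts!(k-1)) ** rhoE ** evol HE (-(ts!(k-1)))) (b (ms!(k-1)))
     * (\<Prod>l<k-1. Tprop HE b (ts!l - ts!(l+1)) (ns!l) (ms!l) (ns!(l+1)) (ms!(l+1))))"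

lemma cc_base: "cc HE rhoE b [n] [m] [u] = braket (b n) (evol HE u ** rhoE ** evol HE (- u)) (b m)"
  by (simp add: cc_def)

lemma cc_step:
  assumes "length ns = Suc k" "length ms = Suc k" "length ts = Suc k"
  shows "cc HE rhoE b (n # ns) (m # ms) (u # ts) = Tprop HE b (u - ts!0) n m (ns!0) (ms!0) * cc HE rhoE b ns ms ts"
proof -
  have "(\<Prod>l<Suc k. Tprop HE b ((u # ts)!l - (u # ts)!(l+1)) ((n # ns)!l) ((m # ms)!l) ((n # ns)!(l+1)) ((m # ms)!(l+1)))
      = Tprop HE b (u - ts!0) n m (ns!0) (ms!0) * (\<Prod>l<k. Tprop HE b (ts!l - ts!(l+1)) (ns!l) (ms!l) (ns!(l+1)) (ms!(l+1)))"
    by (subst prod.lessThan_Suc_shift) simp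
  thus ?thesis using assms by (simp add: cc_def Let_def algebra_simps)
qed

lemma WS_add: "WS HS VS x y t (A + B) = WS HS VS x y t A + WS HS VS x y t B"
  by (simp add: WS_alt matrix_add_ldistrib mm_add_left msc_add)
lemma WS_zero: "WS HS VS x y t 0 = 0"
  by (simp add: WS_alt vec_eq_iff msc_def matrix_matrix_mult_def)
lemma WS_sum: "finite A \<Longrightarrow> WS HS VS x y t (\<Sum>i\<in>A. f i) = (\<Sum>i\<in>A. WS HS VS x y t (f i))"
  by (induction A rule: finite_induct) (auto simp: WS_zero WS_add)
lemma WS_msc: "WS HS VS x y t (msc c A) = msc c (WS HS VS x y t A)"
  by (simp add: WS_alt msc_mm_left msc_mm_right msc_msc msc_diff mult.commute)

lemma expansion:
  fixes b :: "'e::finite \<Rightarrow> complex^'e" and rhoS :: "'s::finite op"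
  assumes hHE: "hermitian HE" and hVE: "hermitian VE" and ob: "orthonormal_family b"
    and VE: "VE = (\<Sum>n\<in>UNIV. msc (of_real (v n)) (ketbra (b n) (b n)))"
  shows "Bl (Lprod (Lop HS VS HE VE) (u # ts) (kron rhoS rhoE)) (nk HE b u n) (nk HE b u m) =
    (\<Sum>ns\<in>Ls (length ts). \<Sum>ms\<in>Ls (length ts). msc (cc HE rhoE b (n # ns) (m # ms) (u # ts))
        (Wcomp HS VS (map v (n # ns)) (map v (m # ms)) (u # ts) rhoS))"
proof (induction ts arbitrary: u n m)
  case Nil
  show ?case
    by (simp add: Ls_0 Bl_Lop[OF hHE hVE ob VE] Bl_rho[OF hHE] cc_base WS_msc)
next
  case (Cons s ts)
  let ?T = "\<lambda>n' m'. Tprop HE b (u - s) n m n' m'"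
  let ?c = "\<lambda>n' ns m' ms. cc HE rhoE b (n' # ns) (m' # ms) (s # ts)"
  let ?W = "\<lambda>n' ns m' ms. Wcomp HS VS (map v (n' # ns)) (map v (m' # ms)) (s # ts) rhoS"
  have "Bl (Lprod (Lop HS VS HE VE) (u # s # ts) (kron rhoS rhoE)) (nk HE b u n) (nk HE b u m)
      = WS HS VS (v n) (v m) u (Bl (Lprod (Lop HS VS HE VE) (s # ts) (kron rhoS rhoE)) (nk HE b u n) (nk HE b u m))"
    by (subst Lprod.simps(2), rule Bl_Lop[OF hHE hVE ob VE])
  also have "\<dots> = WS HS VS (v n) (v m) u (\<Sum>n'\<in>UNIV. \<Sum>m'\<in>UNIV. msc (?T n' m')
          (Bl (Lprod (Lop HS VS HE VE) (s # ts) (kron rhoS rhoE)) (nk HE b s n') (nk HE b s m')))"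
    by (rule arg_cong[where f="WS HS VS (v n) (v m) u"], rule Bl_change[OF hHE ob])
  also have "\<dots> = (\<Sum>n'\<in>UNIV. \<Sum>m'\<in>UNIV. \<Sum>ns\<in>Ls (length ts). \<Sum>ms\<in>Ls (length ts).
      msc (?T n' m' * ?c n' ns m' ms) (WS HS VS (v n) (v m) u (?W n' ns m' ms)))"
    by (simp only: Cons.IH) (simp add: WS_sum Ls_finite WS_msc msc_sum msc_msc del: Lprod.simps)
  also have "\<dots> = (\<Sum>n'\<in>UNIV. \<Sum>ns\<in>Ls (length ts). \<Sum>m'\<in>UNIV. \<Sum>ms\<in>Ls (length ts).
      msc (?T n' m' * ?c n' ns m' ms) (WS HS VS (v n) (v m) u (?W n' ns m' ms)))"
    by (rule sum.cong[OF refl], rule sum.swap)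
  also have "\<dots> = (\<Sum>ns\<in>Ls (length (s # ts)). \<Sum>ms\<in>Ls (length (s # ts)). msc (cc HE rhoE b (n # ns) (m # ms) (u # s # ts))
        (Wcomp HS VS (map v (n # ns)) (map v (m # ms)) (u # s # ts) rhoS))"
  proof -
    have eq: "cc HE rhoE b (n # n' # ns) (m # m' # ms) (u # s # ts) = ?T n' m' * ?c n' ns m' ms"
      if "ns \<in> Ls (length ts)" "ms \<in> Ls (length ts)" for n' m' ns ms
      using that cc_step[of "n' # ns" "length ts" "m' # ms" "s # ts" HE rhoE b n m u] by (simp add: Ls_def)
    show ?thesis
      unfolding length_Cons sum_Ls_Suc
      by (intro sum.cong refl) (simp add: eq)
  qed
  finally show ?case .
qed


definition NN :: "('e \<Rightarrow> real) \<Rightarrow> nat \<Rightarrow> real list \<Rightarrow> 'e list set" where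
  "NN v k xs = {ns. length ns = k \<and> (\<forall>l<k. v (ns!l) = xs!l)}"

lemma qE_eq:
  assumes "length xs = length ts"
  shows "qE HE rhoE b v xs ys ts = (\<Sum>ns\<in>NN v (length ts) xs. \<Sum>ms\<in>NN v (length ts) ys.
     (if ns!0 = ms!0 then 1 else 0) * cc HE rhoE b ns ms ts)"
  using assms by (simp add: qE_def cc_def Let_def NN_def mult.assoc)

lemma fiber:
  fixes v :: "'e::finite \<Rightarrow> real"
  shows "(\<Sum>xs\<in>{xs. length xs = k \<and> set xs \<subseteq> range v}. \<Sum>ns\<in>NN v k xs. f xs ns) = (\<Sum>ns\<in>Ls k. f (map v ns) ns)"
proof -
  let ?X = "{xs. length xs = k \<and> set xs \<subseteq> range v}"
  have finX: "finite ?X"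
  proof -
    have "?X = {xs. set xs \<subseteq> range v \<and> length xs = k}" by auto
    thus ?thesis using finite_lists_length_eq[of "range v" k] by simp
  qed
  have "(\<Sum>xs\<in>?X. \<Sum>ns\<in>NN v k xs. f xs ns) = (\<Sum>xs\<in>?X. \<Sum>ns\<in>{ns\<in>Ls k. map v ns = xs}. f xs ns)"
  proof (rule sum.cong[OF refl])
    fix xs assume "xs \<in> ?X"
    hence "NN v k xs = {ns\<in>Ls k. map v ns = xs}"
      by (auto simp: NN_def Ls_def list_eq_iff_nth_eq)
    thus "(\<Sum>ns\<in>NN v k xs. f xs ns) = (\<Sum>ns\<in>{ns\<in>Ls k. map v ns = xs}. f xs ns)" by simp
  qed
  also have "\<dots> = (\<Sum>ns\<in>Ls k. \<Sum>xs\<in>{xs\<in>?X. map v ns = xs}. f xs ns)"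
    by (rule sum.swap_restrict[OF finX Ls_finite])
  also have "\<dots> = (\<Sum>ns\<in>Ls k. f (map v ns) ns)"
  proof (rule sum.cong[OF refl])
    fix ns :: "'e list" assume "ns \<in> Ls k"
    hence "{xs\<in>?X. map v ns = xs} = {map v ns}" by (auto simp: Ls_def)
    thus "(\<Sum>xs\<in>{xs\<in>?X. map v ns = xs}. f xs ns) = f (map v ns) ns" by simp
  qed
  finally show ?thesis .
qed

lemma G_eq:
  fixes v :: "'e::finite \<Rightarrow> real" and b :: "'e \<Rightarrow> complex^'e"
  assumes "length ts = k" "k \<ge> 1"
  shows "(\<Sum>xs\<in>{xs. length xs = k \<and> set xs \<subseteq> range v}. \<Sum>ys\<in>{ys. length ys = k \<and> set ys \<subseteq> range v}.
      (if xs!0 = ys!0 then 1 else 0) * qE HE rhoE b v xs ys ts * (Wcomp HS VS xs ys ts rhoS) $ i $ j)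
    = (\<Sum>ns\<in>Ls k. \<Sum>ms\<in>Ls k. (if ns!0 = ms!0 then 1 else 0) * cc HE rhoE b ns ms ts
        * (Wcomp HS VS (map v ns) (map v ms) ts rhoS) $ i $ j)"
proof -
  let ?X = "{xs. length xs = k \<and> set xs \<subseteq> range v}"
  let ?F = "\<lambda>xs ns ys ms. (if xs!0 = ys!0 then 1 else 0) * ((if ns!0 = ms!0 then 1 else 0) * cc HE rhoE b ns ms ts)
      * (Wcomp HS VS xs ys ts rhoS) $ i $ j"
  have "(\<Sum>xs\<in>?X. \<Sum>ys\<in>?X. (if xs!0 = ys!0 then 1 else 0) * qE HE rhoE b v xs ys ts * (Wcomp HS VS xs ys ts rhoS) $ i $ j)
      = (\<Sum>xs\<in>?X. \<Sum>ys\<in>?X. \<Sum>ns\<in>NN v k xs. \<Sum>ms\<in>NN v k ys. ?F xs ns ys ms)"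
    using assms(1) by (intro sum.cong refl) (simp add: qE_eq sum_distrib_left sum_distrib_right)
  also have "\<dots> = (\<Sum>xs\<in>?X. \<Sum>ns\<in>NN v k xs. \<Sum>ys\<in>?X. \<Sum>ms\<in>NN v k ys. ?F xs ns ys ms)"
    by (intro sum.cong refl sum.swap)
  also have "\<dots> = (\<Sum>ns\<in>Ls k. \<Sum>ms\<in>Ls k. ?F (map v ns) ns (map v ms) ms)"
    by (simp only: fiber)
  also have "\<dots> = (\<Sum>ns\<in>Ls k. \<Sum>ms\<in>Ls k. (if ns!0 = ms!0 then 1 else 0) * cc HE rhoE b ns ms ts
        * (Wcomp HS VS (map v ns) (map v ms) ts rhoS) $ i $ j)"
  proof (intro sum.cong refl)
    fix ns ms :: "'e list" assume "ns \<in> Ls k" "ms \<in> Ls k"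
    hence "length ns = k" "length ms = k" by (auto simp: Ls_def)
    hence "0 < length ns" "0 < length ms" using assms by auto
    thus "?F (map v ns) ns (map v ms) ms = (if ns!0 = ms!0 then 1 else 0) * cc HE rhoE b ns ms ts
        * (Wcomp HS VS (map v ns) (map v ms) ts rhoS) $ i $ j"
      by auto
  qed
  finally show ?thesis .
qed

lemma cons_decomp:
  "(\<Sum>ns\<in>Ls (Suc k). \<Sum>ms\<in>Ls (Suc k). (if ns!0 = ms!0 then 1 else 0) * F ns ms)
    = (\<Sum>n\<in>(UNIV::'e::finite set). \<Sum>ns\<in>Ls k. \<Sum>ms\<in>Ls k. (F (n # ns) (n # ms) :: complex))"
proof -
  have "(\<Sum>ns\<in>Ls (Suc k). \<Sum>ms\<in>Ls (Suc k). (if ns!0 = ms!0 then 1 else 0) * F ns ms)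
      = (\<Sum>n\<in>(UNIV::'e set). \<Sum>ns\<in>Ls k. \<Sum>m\<in>UNIV. \<Sum>ms\<in>Ls k. (if n = m then F (n # ns) (m # ms) else 0))"
    by (simp add: sum_Ls_Suc if_mult1 cong: if_cong)
  also have "\<dots> = (\<Sum>n\<in>(UNIV::'e set). \<Sum>ns\<in>Ls k. \<Sum>ms\<in>Ls k. F (n # ns) (n # ms))"
    by (simp add: sum_if_const)
  finally show ?thesis .
qed

lemma ptrace_expansion:
  fixes b :: "'e::finite \<Rightarrow> complex^'e" and rhoS :: "'s::finite op"
  assumes hHE: "hermitian HE" and hVE: "hermitian VE" and ob: "orthonormal_family b"
    and VE: "VE = (\<Sum>n\<in>UNIV. msc (of_real (v n)) (ketbra (b n) (b n)))"
  shows "ptraceE (Lprod (Lop HS VS HE VE) (u # ts) (kron rhoS rhoE)) $ i $ j =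
    (\<Sum>n\<in>UNIV. \<Sum>ns\<in>Ls (length ts). \<Sum>ms\<in>Ls (length ts). cc HE rhoE b (n # ns) (n # ms) (u # ts)
        * (Wcomp HS VS (map v (n # ns)) (map v (n # ms)) (u # ts) rhoS) $ i $ j)"
  by (simp add: ptrace_Bl[OF hHE ob, of _ u] expansion[OF hHE hVE ob VE] msc_def sum_component del: Wcomp.simps Lprod.simps)

lemma iterint_cong:
  "(\<And>ts. length ts = n \<Longrightarrow> F ts = G ts) \<Longrightarrow> iterint n s F = iterint n s G"
proof (induction n arbitrary: s F G)
  case 0 thus ?case by simp
next
  case (Suc n)
  show ?case
    by (simp, rule integral_cong, rule Suc.IH) (simp add: Suc.prems)
qed

lemma contA:
  assumes cont: "\<And>X. continuous_on {0..T} X \<Longrightarrow> continuous_on {0..T} (\<lambda>s. L s (X s))"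
  shows "continuous_on {0..T} (Aseq L P0 k)"
  by (induction k) (auto intro!: cont_indef cont simp: continuous_on_const)

lemma iterint_Lprod:
  assumes bl: "\<And>u. bounded_linear (L u)"
    and cont: "\<And>X. continuous_on {0..T} X \<Longrightarrow> continuous_on {0..T} (\<lambda>s. L s (X s))"
  shows "bounded_linear \<psi> \<Longrightarrow> s \<in> {0..T} \<Longrightarrow> iterint n s (\<lambda>ts. \<psi> (Lprod L ts P0)) = (\<psi> (Aseq L P0 n s) :: complex)"
proof (induction n arbitrary: \<psi> s)
  case 0 thus ?case by simp
next
  case (Suc n)
  have "iterint (Suc n) s (\<lambda>ts. \<psi> (Lprod L ts P0)) = integral {0..s} (\<lambda>u. iterint n u (\<lambda>ts. \<psi> (L u (Lprod L ts P0))))"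
    by simp
  also have "\<dots> = integral {0..s} (\<lambda>u. \<psi> (L u (Aseq L P0 n u)))"
  proof (rule integral_cong)
    fix u assume "u \<in> {0..s}"
    hence "u \<in> {0..T}" using Suc.prems by auto
    moreover have "bounded_linear (\<lambda>X. \<psi> (L u X))"
      using bounded_linear_compose[OF Suc.prems(1) bl] .
    ultimately show "iterint n u (\<lambda>ts. \<psi> (L u (Lprod L ts P0))) = \<psi> (L u (Aseq L P0 n u))"
      using Suc.IH[of "\<lambda>X. \<psi> (L u X)" u] by simp
  qed
  also have "\<dots> = \<psi> (integral {0..s} (\<lambda>u. L u (Aseq L P0 n u)))"
    using integral_linear[OF int_sub[where T=T, OF cont[OF contA[OF cont]] Suc.prems(2)] Suc.prems(1)]
    by (simp only: o_def)
  finally show ?case by simp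
qed


lemma Lop_add: "Lop HS VS HE VE s (X + Y) = Lop HS VS HE VE s X + Lop HS VS HE VE s Y"
  by (simp add: Lop_def matrix_add_ldistrib mm_add_left)
lemma Lop_msc: "Lop HS VS HE VE s (msc c X) = msc c (Lop HS VS HE VE s X)"
  by (simp add: Lop_def msc_mm_left msc_mm_right msc_diff)
lemma Lop_bl: "bounded_linear (Lop HS VS HE VE s)"
proof -
  have "linear (Lop HS VS HE VE s)"
    by (rule linearI) (simp_all add: Lop_def matrix_add_ldistrib mm_add_left mm_scaleR_left mm_scaleR_right scaleR_diff_right)
  thus ?thesis using linear_conv_bounded_linear by blast
qed
lemma Lop_cont: "continuous_on S X \<Longrightarrow> continuous_on S (\<lambda>s. Lop HS VS HE VE s (X s))"
  unfolding Lop_def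
  by (intro continuous_on_diff bounded_bilinear.continuous_on[OF bb_mm] HI_cont)

lemma Lop_bound:
  fixes HS VS :: "'s::finite op" and HE VE :: "'e::finite op"
  obtains C where "0 \<le> C" "\<And>s X. s \<in> {0..T} \<Longrightarrow> norm (Lop HS VS HE VE s X) \<le> C * norm X"
proof -
  obtain K where K: "\<And>a b. norm ((a::('s \<times> 'e) op) ** (b::('s \<times> 'e) op)) \<le> norm a * norm b * K" and K0: "0 < K"
    using bounded_bilinear.pos_bounded[OF bb_mm] by blast
  have "bounded ((\<lambda>t. HI HS VS HE VE t) ` {0..T})"
    by (intro compact_imp_bounded compact_continuous_image HI_cont compact_Icc)
  then obtain h where h0: "\<forall>s\<in>{0..T}. norm (HI HS VS HE VE s) \<le> h" by (auto simp: bounded_iff)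
  hence h: "\<And>s. s \<in> {0..T} \<Longrightarrow> norm (HI HS VS HE VE s) \<le> h" by blast
  show ?thesis
  proof (rule that[of "2 * max h 0 * K"])
    show "0 \<le> 2 * max h 0 * K" using K0 by simp
    fix s X assume s: "s \<in> {0..T}"
    have hs: "norm (HI HS VS HE VE s) \<le> max h 0" using h[OF s] by simp
    have "norm (Lop HS VS HE VE s X) \<le> norm (HI HS VS HE VE s ** X) + norm (X ** HI HS VS HE VE s)"
      unfolding Lop_def by (rule norm_triangle_ineq4)
    also have "\<dots> \<le> norm (HI HS VS HE VE s) * norm X * K + norm X * norm (HI HS VS HE VE s) * K"
      by (intro add_mono K)
    also have "\<dots> \<le> max h 0 * norm X * K + norm X * max h 0 * K"
      using K0 hs by (intro add_mono mult_right_mono mult_left_mono) auto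
    finally show "norm (Lop HS VS HE VE s X) \<le> 2 * max h 0 * K * norm X" by (simp add: algebra_simps)
  qed
qed

lemma psi_bl: "bounded_linear (\<lambda>X::('s::finite \<times> 'e::finite) op. ptraceE X $ i $ j)"
proof -
  have "linear (\<lambda>X::('s \<times> 'e) op. ptraceE X $ i $ j)"
    by (rule linearI) (simp_all add: ptraceE_def sum.distrib scaleR_sum_right)
  thus ?thesis using linear_conv_bounded_linear by blast
qed

lemma psi_hom: "ptraceE (msc c X) $ i $ j = c * ptraceE X $ i $ j"
  by (simp add: ptraceE_def msc_def sum_distrib_left)

lemma Pt_eq:
  assumes "s \<in> {0..T}"
  shows "Pt HS VS HE VE r s = r + msc (- \<i>) (integral {0..s} (\<lambda>s. Lop HS VS HE VE s (Pt HS VS HE VE r s)))"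
proof -
  have s0: "0 \<le> s" using assms by simp
  have int: "(\<lambda>s. Lop HS VS HE VE s (Pt HS VS HE VE r s)) integrable_on {0..s}"
    by (intro integrable_continuous_interval Lop_cont Pt_cont)
  have "integral {0..s} (\<lambda>s. msc (- \<i>) (Lop HS VS HE VE s (Pt HS VS HE VE r s))) = Pt HS VS HE VE r s - r"
    using Pt_integral[OF s0] by (rule integral_unique)
  moreover have "integral {0..s} (\<lambda>s. msc (- \<i>) (Lop HS VS HE VE s (Pt HS VS HE VE r s)))
      = msc (- \<i>) (integral {0..s} (\<lambda>s. Lop HS VS HE VE s (Pt HS VS HE VE r s)))"
    using integral_linear[OF int bl_msc] by (simp only: o_def)
  ultimately show ?thesis by (simp add: algebra_simps)
qed

lemma ptrace_kron_entry: "ptraceE (kron A B) $ i $ j = A $ i $ j * mtrace B"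
  by (simp add: ptraceE_def kron_def mtrace_def sum_distrib_left)

theorem mainTheorem1:
  fixes HS VS rhoS :: "'s::finite op"
    and HE VE rhoE :: "'e::finite op"
    and b :: "'e \<Rightarrow> complex^'e" and v :: "'e \<Rightarrow> real"
    and t :: real
  assumes "hermitian HS" and "hermitian VS" and "hermitian HE" and "hermitian VE"
    and "density rhoS" and "density rhoE"
    and "orthonormal_family b"
    and "VE = (\<Sum>n\<in>UNIV. msc (of_real (v n)) (ketbra (b n) (b n)))"
    and "0 \<le> t"
  shows "\<forall>i j. (\<lambda>k. dyson_term HS VS HE VE rhoS rhoE b v t k i j)
                  sums (rhoSI HS VS HE VE rhoS rhoE t $ i $ j)"
proof (intro allI)
  fix i j
  note hHE = assms(3) and hVE = assms(4) and ob = assms(7) and VE = assms(8)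
  let ?L = "Lop HS VS HE VE" and ?r = "kron rhoS rhoE"
  let ?psi = "\<lambda>X::('s \<times> 'e) op. ptraceE X $ i $ j"
  obtain C where C: "0 \<le> C" "\<And>s X. s \<in> {0..t} \<Longrightarrow> norm (?L s X) \<le> C * norm X"
    using Lop_bound by metis
  have tt: "t \<in> {0..t}" using assms(9) by simp
  have S: "(\<lambda>k. (- \<i>)^k * ?psi (Aseq ?L ?r k t)) sums ?psi (Pt HS VS HE VE ?r t)"
  proof (rule picard[where T=t])
    show "\<And>s X Y. ?L s (X + Y) = ?L s X + ?L s Y" by (rule Lop_add)
    show "\<And>s c X. ?L s (msc c X) = msc c (?L s X)" by (rule Lop_msc)
    show "\<And>X. continuous_on {0..t} X \<Longrightarrow> continuous_on {0..t} (\<lambda>s. ?L s (X s))" by (rule Lop_cont)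
    show "\<And>s X. s \<in> {0..t} \<Longrightarrow> norm (?L s X) \<le> C * norm X" by (rule C(2))
    show "0 \<le> C" by (rule C(1))
    show "continuous_on {0..t} (Pt HS VS HE VE ?r)" by (rule Pt_cont)
    show "\<And>s. s \<in> {0..t} \<Longrightarrow> Pt HS VS HE VE ?r s = ?r + msc (- \<i>) (integral {0..s} (\<lambda>s. ?L s (Pt HS VS HE VE ?r s)))"
      by (rule Pt_eq)
    show "bounded_linear ?psi" by (rule psi_bl)
    show "\<And>c X. ?psi (msc c X) = c * ?psi X" by (rule psi_hom)
    show "t \<in> {0..t}" by (rule tt)
  qed
  have eq: "dyson_term HS VS HE VE rhoS rhoE b v t k i j = (- \<i>)^k * ?psi (Aseq ?L ?r k t)" for k
  proof (cases k)
    case 0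
    have "mtrace rhoE = 1" using assms(6) by (simp add: density_def)
    thus ?thesis using 0 by (simp add: dyson_term_def ptrace_kron_entry)
  next
    case (Suc k')
    let ?G = "\<lambda>ts. \<Sum>xs\<in>{xs. length xs = k \<and> set xs \<subseteq> range v}.
        \<Sum>ys\<in>{ys. length ys = k \<and> set ys \<subseteq> range v}.
          (if xs!0 = ys!0 then 1 else 0) * qE HE rhoE b v xs ys ts
          * (Wcomp HS VS xs ys ts rhoS)$i$j"
    have "iterint k t ?G = iterint k t (\<lambda>ts. ?psi (Lprod ?L ts ?r))"
    proof (rule iterint_cong)
      fix ts :: "real list" assume len: "length ts = k"
      then obtain u ts' where ts: "ts = u # ts'" and len': "length ts' = k'"
        using Suc by (auto simp: length_Suc_conv)
      have "?G ts = (\<Sum>ns\<in>Ls k. \<Sum>ms\<in>Ls k. (if ns!0 = ms!0 then 1 else 0) * cc HE rhoE b ns ms ts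
          * (Wcomp HS VS (map v ns) (map v ms) ts rhoS) $ i $ j)"
        by (rule G_eq[OF len]) (simp add: Suc)
      also have "\<dots> = (\<Sum>ns\<in>Ls k. \<Sum>ms\<in>Ls k. (if ns!0 = ms!0 then 1 else 0) * (cc HE rhoE b ns ms ts
          * (Wcomp HS VS (map v ns) (map v ms) ts rhoS) $ i $ j))"
        by (simp add: mult.assoc)
      also have "\<dots> = (\<Sum>n\<in>UNIV. \<Sum>ns\<in>Ls k'. \<Sum>ms\<in>Ls k'. cc HE rhoE b (n # ns) (n # ms) ts
          * (Wcomp HS VS (map v (n # ns)) (map v (n # ms)) ts rhoS) $ i $ j)"
        unfolding Suc by (rule cons_decomp)
      also have "\<dots> = ?psi (Lprod ?L ts ?r)"
      proof -
        have "?psi (Lprod ?L (u # ts') ?r) = (\<Sum>n\<in>UNIV. \<Sum>ns\<in>Ls (length ts'). \<Sum>ms\<in>Ls (length ts'). cc HE rhoE b (n # ns) (n # ms) (u # ts')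
           * (Wcomp HS VS (map v (n # ns)) (map v (n # ms)) (u # ts') rhoS) $ i $ j)"
          by (rule ptrace_expansion[OF hHE hVE ob VE])
        thus ?thesis unfolding ts len' by simp
      qed
      finally show "?G ts = ?psi (Lprod ?L ts ?r)" .
    qed
    also have "\<dots> = ?psi (Aseq ?L ?r k t)"
      by (rule iterint_Lprod[where T=t, OF Lop_bl Lop_cont psi_bl tt])
    finally show ?thesis using Suc by (simp add: dyson_term_def)
  qed
  have "?psi (Pt HS VS HE VE ?r t) = rhoSI HS VS HE VE rhoS rhoE t $ i $ j"
    by (simp add: rhoSI_Pt)
  with S show "(\<lambda>k. dyson_term HS VS HE VE rhoS rhoE b v t k i j) sums (rhoSI HS VS HE VE rhoS rhoE t $ i $ j)"
    by (simp add: eq)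
qed


end
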